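(* (1) If $\mathrm{HL}\vdash H\to C$ and $e_0\in E_H$ is labeled by $\times(M)$, then $\mathrm{HL}\vdash H[e_0/M]\to C$. (2) If $\mathrm{HL}\vdash H\to N\div D$ and $e_0\in E_D$ is the edge of $D$ labeled by $\$$, then $\mathrm{HL}\vdash D[e_0/H]\to N$.
   Context: Hypergraphs: given labels $C$ with $type:C\to\mathbb{N}$, a graph is $G=\langle V,E,att,lab,ext\rangle$ with finite $V,E$, $att:E\to V^\circledast$ (strings of distinct nodes), $lab:E\to C$ with $type(lab(e))=|att(e)|$, $ext\in V^\circledast$; $type(G)=|ext|$; isomorphic graphs identified. Handle $a^\bullet$: one edge labeled $a$ attached to $v_1\dots v_n$, all external in that order. Replacement $G[e/H]$ ($type(e)=type(H)$): remove $e$, insert a disjoint copy of $H$, fuse the $i$-th external node of $H$ with the $i$-th attachment node of $e$; simultaneous replacement; relabeling $G[e:=a]$. $\mathrm{HL}$: primitive types $Pr$ with $type:Pr\to\mathbb{N}$ (infinitely many of each arity); symbol $\$$ of any arity. Types: primitives; $N\div D$ where $D$ has exactly one edge $d_0$ labeled $\$$, others labeled by types, $type(N)=type(D)$, $type(N\div D)=type_D(d_0)$; $\times(M)$ for a type-labeled graph $M$, $type(\times(M))=type(M)$. Graph sequent $H\to A$ with $type(H)=type(A)$. Axioms $p^\bullet\to p$. Rules: $(\div\to)$: for $N\div D$ with $E_D=\{d_0,\dots,d_k\}$, $e\in E_H$ labeled $N$: from $H\to A$, $H_i\to lab(d_i)$ infer $H[e/D][d_0:=N\div D][d_1/H_1,\dots,d_k/H_k]\to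 A$; $(\to\div)$: from $D[d_0/F]\to N$ infer $F\to N\div D$; $(\times\to)$: if $e\in E_G$ is labeled $\times(F)$, from $G[e/F]\to A$ infer $G\to A$; $(\to\times)$: with $E_M=\{m_1,\dots,m_l\}$ ($l\ge0$), from $H_i\to lab(m_i)$ infer $M[m_1/H_1,\dots,m_l/H_l]\to\times(M)$. *)

theory Defs
  imports Main "HOL-Library.Nat_Bijection"
begin

text \<open>A hypergraph with labels of type 'l: a node set V, a finite list of edges
  (edge i is the i-th list entry, given by its attachment string and label),
  and the string of external nodes. Isomorphic graphs are identified via the
  relation hg_iso below (derivability is closed under it).\<close>

datatype 'l hgraph = HG (gV: "nat set") (gE: "(nat list \<times> 'l) list") (gext: "nat list")

definition hg_struct :: "'l hgraph \<Rightarrow> bool" where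
  "hg_struct G \<longleftrightarrow> finite (gV G)
     \<and> (\<forall>(a, l) \<in> set (gE G). distinct a \<and> set a \<subseteq> gV G)
     \<and> distinct (gext G) \<and> set (gext G) \<subseteq> gV G"

definition hg_iso :: "'l hgraph \<Rightarrow> 'l hgraph \<Rightarrow> bool" where
  "hg_iso G G' \<longleftrightarrow> (\<exists>f \<pi>. bij_betw f (gV G) (gV G')
      \<and> bij_betw \<pi> {..<length (gE G)} {..<length (gE G')}
      \<and> (\<forall>i < length (gE G). gE G' ! \<pi> i = (map f (fst (gE G ! i)), snd (gE G ! i)))
      \<and> gext G' = map f (gext G))"

text \<open>Simultaneous replacement: every edge i with r i = Some H is removed and a
  disjoint copy of H is inserted, the j-th external node of H being fused with
  the j-th attachment node of edge i. Nodes of G are renamed to prod_encode (0,v),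
  internal nodes w of the copy of H for edge i to prod_encode (Suc i, w).
  Edges are kept in order; the edges of the copy of H replacing edge i appear
  (in the order of H) at the position of edge i.\<close>

definition g_node :: "nat \<Rightarrow> nat" where
  "g_node v = prod_encode (0, v)"

definition h_node :: "nat \<Rightarrow> 'l hgraph \<Rightarrow> nat list \<Rightarrow> nat \<Rightarrow> nat" where
  "h_node i H a w = (case map_of (zip (gext H) a) w of
       Some u \<Rightarrow> g_node u | None \<Rightarrow> prod_encode (Suc i, w))"

definition repl :: "'l hgraph \<Rightarrow> (nat \<Rightarrow> 'l hgraph option) \<Rightarrow> 'l hgraph" where
  "repl G r = HG
     (g_node ` gV G \<union>
        (\<Union>i \<in> {i. i < length (gE G)}. case r i of None \<Rightarrow> {}
           | Some H \<Rightarrow> (\<lambda>w. prod_encode (Suc i, w)) ` (gV H - set (gext H))))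
     (concat (map (\<lambda>(i, (a, l)). case r i of
                None \<Rightarrow> [(map g_node a, l)]
              | Some H \<Rightarrow> map (\<lambda>(b, l'). (map (h_node i H a) b, l')) (gE H))
        (enumerate 0 (gE G))))
     (map g_node (gext G))"

definition repl1 :: "'l hgraph \<Rightarrow> nat \<Rightarrow> 'l hgraph \<Rightarrow> 'l hgraph" where
  "repl1 G e H = repl G (\<lambda>i. if i = e then Some H else None)"

definition handle :: "'l \<Rightarrow> nat \<Rightarrow> 'l hgraph" where
  "handle a n = HG {..<n} [([0..<n], a)] [0..<n]"

text \<open>Primitive types: Prim p n is the p-th primitive type of arity n (so there are
  infinitely many of each arity). In Div N D, the label None plays the role of
  the symbol \$, Some t the type t.\<close>

datatype tp = Prim nat nat | Div tp "tp option hgraph" | Times "tp hgraph"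

definition ttype :: "tp \<Rightarrow> nat" where
  "ttype A = (case A of
      Prim p n \<Rightarrow> n
    | Div N D \<Rightarrow> (case find (\<lambda>(a, l). l = None) (gE D) of
                    Some (a, l) \<Rightarrow> length a | None \<Rightarrow> 0)
    | Times M \<Rightarrow> length (gext M))"

inductive wf_tp :: "tp \<Rightarrow> bool" where
  wf_Prim: "wf_tp (Prim p n)"
| wf_Div: "\<lbrakk> wf_tp N; hg_struct D;
             length (filter (\<lambda>(a, l). l = None) (gE D)) = 1;
             \<forall>a t. (a, Some t) \<in> set (gE D) \<longrightarrow> wf_tp t \<and> length a = ttype t;
             ttype N = length (gext D) \<rbrakk> \<Longrightarrow> wf_tp (Div N D)"
| wf_Times: "\<lbrakk> hg_struct M;
             \<forall>a t. (a, t) \<in> set (gE M) \<longrightarrow> wf_tp t \<and> length a = ttype t \<rbrakk>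
             \<Longrightarrow> wf_tp (Times M)"

definition wfg :: "tp hgraph \<Rightarrow> bool" where
  "wfg G \<longleftrightarrow> hg_struct G \<and> (\<forall>a t. (a, t) \<in> set (gE G) \<longrightarrow> wf_tp t \<and> length a = ttype t)"

definition fill :: "tp option hgraph \<Rightarrow> tp \<Rightarrow> tp hgraph" where
  "fill D A = map_hgraph (\<lambda>l. case l of None \<Rightarrow> A | Some t \<Rightarrow> t) D"

definition plug :: "tp option hgraph \<Rightarrow> nat \<Rightarrow> tp hgraph \<Rightarrow> tp hgraph" where
  "plug D d0 F = repl1 (map_hgraph the D) d0 F"

text \<open>Conclusion graph of the rule (div L): H[e/D][d0 := N div D][d1/H1,...,dk/Hk].
  In H[e/D] the j-th edge of D sits at index e + j.\<close>
definition divL_graph :: "tp hgraph \<Rightarrow> nat \<Rightarrow> tp \<Rightarrow> tp option hgraph \<Rightarrow> nat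
                          \<Rightarrow> (nat \<Rightarrow> tp hgraph) \<Rightarrow> tp hgraph" where
  "divL_graph H e N D d0 Hs =
     repl (repl1 H e (fill D (Div N D)))
          (\<lambda>i. if e \<le> i \<and> i < e + length (gE D) \<and> i \<noteq> e + d0 then Some (Hs (i - e)) else None)"

inductive HL :: "tp hgraph \<Rightarrow> tp \<Rightarrow> bool" where
  Ax: "HL (handle (Prim p n) n) (Prim p n)"
| Iso: "\<lbrakk> HL G A; hg_iso G G' \<rbrakk> \<Longrightarrow> HL G' A"
| DivL: "\<lbrakk> HL H A; wfg H; e < length (gE H); snd (gE H ! e) = N;
           wf_tp (Div N D); d0 < length (gE D); snd (gE D ! d0) = None;
           \<forall>j < length (gE D). j \<noteq> d0 \<longrightarrow> HL (Hs j) (the (snd (gE D ! j))) \<rbrakk>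
         \<Longrightarrow> HL (divL_graph H e N D d0 Hs) A"
| DivR: "\<lbrakk> HL (plug D d0 F) N; wf_tp (Div N D); d0 < length (gE D);
           snd (gE D ! d0) = None; wfg F; length (gext F) = ttype (Div N D) \<rbrakk>
         \<Longrightarrow> HL F (Div N D)"
| TimesL: "\<lbrakk> HL (repl1 G e F) A; wfg G; e < length (gE G); snd (gE G ! e) = Times F \<rbrakk>
         \<Longrightarrow> HL G A"
| TimesR: "\<lbrakk> wf_tp (Times M); \<forall>i < length (gE M). HL (Hs i) (snd (gE M ! i)) \<rbrakk>
         \<Longrightarrow> HL (repl M (\<lambda>i. if i < length (gE M) then Some (Hs i) else None)) (Times M)"

end

theory Submission
  imports Defs "HOL-Combinatorics.List_Permutation"
begin

definition emap :: "(nat \<Rightarrow> nat) \<Rightarrow> nat list \<times> 'l \<Rightarrow> nat list \<times> 'l" where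
  "emap f x = (map f (fst x), snd x)"

lemma emap_simp[simp]: "emap f (a, l) = (map f a, l)" by (simp add: emap_def)
lemma snd_emap[simp]: "snd (emap f x) = snd x" by (simp add: emap_def)
lemma fst_emap[simp]: "fst (emap f x) = map f (fst x)" by (simp add: emap_def)
lemma emap_comp: "emap f (emap g x) = emap (f \<circ> g) x" by (simp add: emap_def)

definition hiso :: "'l hgraph \<Rightarrow> 'l hgraph \<Rightarrow> (nat \<Rightarrow> nat) \<Rightarrow> bool" where
  "hiso G G' f \<longleftrightarrow> bij_betw f (gV G) (gV G')
     \<and> mset (gE G') = image_mset (emap f) (mset (gE G)) \<and> gext G' = map f (gext G)"

lemma mset_upt_image:
  assumes "bij_betw p {..<n} {..<m}"
  shows "image_mset p (mset [0..<n]) = mset [0..<m]"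
proof -
  have "image_mset p (mset_set {..<n}) = mset_set (p ` {..<n})"
    using assms by (simp add: bij_betw_def image_mset_mset_set)
  moreover have "mset [0..<k] = mset_set {..<k}" for k
    by (metis atLeast0LessThan mset_set_upto_eq_mset_upto)
  ultimately show ?thesis using assms by (simp add: bij_betw_def)
qed

lemma hg_iso_iff: "hg_iso G G' \<longleftrightarrow> (\<exists>f. hiso G G' f)"
proof
  assume "hg_iso G G'"
  then obtain f \<pi> where f: "bij_betw f (gV G) (gV G')"
     and p: "bij_betw \<pi> {..<length (gE G)} {..<length (gE G')}"
     and e: "\<forall>i < length (gE G). gE G' ! \<pi> i = (map f (fst (gE G ! i)), snd (gE G ! i))"
     and x: "gext G' = map f (gext G)" unfolding hg_iso_def by blast
  have "mset (gE G') = image_mset (\<lambda>i. gE G' ! i) (mset [0..<length (gE G')])"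
    by (metis map_nth mset_map)
  also have "\<dots> = image_mset (\<lambda>i. gE G' ! i) (image_mset \<pi> (mset [0..<length (gE G)]))"
    using mset_upt_image[OF p] by simp
  also have "\<dots> = image_mset (\<lambda>i. emap f (gE G ! i)) (mset [0..<length (gE G)])"
    by (simp add: image_mset.compositionality) (rule image_mset_cong, use e in \<open>auto simp: emap_def\<close>)
  also have "\<dots> = image_mset (emap f) (mset (gE G))"
  proof -
    have "map (\<lambda>i. emap f (gE G ! i)) [0..<length (gE G)] = map (emap f) (gE G)"
      by (rule nth_equalityI) auto
    then show ?thesis by (metis mset_map)
  qed
  finally show "\<exists>f. hiso G G' f" using f x unfolding hiso_def by blast
next
  assume "\<exists>f. hiso G G' f"
  then obtain f where f: "bij_betw f (gV G) (gV G')"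
    and m: "mset (gE G') = image_mset (emap f) (mset (gE G))" and x: "gext G' = map f (gext G)"
    unfolding hiso_def by blast
  have "mset (map (emap f) (gE G)) = mset (gE G')" using m by simp
  from permutation_Ex_bij[OF this] obtain p where
    p: "bij_betw p {..<length (gE G)} {..<length (gE G')}"
    and q: "\<forall>i<length (gE G). emap f (gE G ! i) = gE G' ! p i" by auto
  show "hg_iso G G'" unfolding hg_iso_def
    by (rule exI[of _ f], rule exI[of _ p]) (use f p q x in \<open>auto simp: emap_def\<close>)
qed

definition intn :: "'l hgraph \<Rightarrow> nat set" where "intn H = gV H - set (gext H)"

definition esum :: "'i set \<Rightarrow> ('i \<Rightarrow> 'a) \<Rightarrow> 'a multiset" where
  "esum I es = (\<Sum>i\<in>I. {#es i#})"

definition decomp :: "'l hgraph \<Rightarrow> 'l hgraph \<Rightarrow> 'i set \<Rightarrow> ('i \<Rightarrow> nat list \<times> 'l) \<Rightarrow> ('i \<Rightarrow> 'l hgraph)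
   \<Rightarrow> (nat \<Rightarrow> nat) \<Rightarrow> ('i \<Rightarrow> nat \<Rightarrow> nat) \<Rightarrow> bool" where
 "decomp X G I es Hs \<phi> \<psi> \<longleftrightarrow> finite I
   \<and> esum I es \<subseteq># mset (gE G)
   \<and> hg_struct G \<and> (\<forall>i\<in>I. hg_struct (Hs i))
   \<and> inj_on \<phi> (gV G) \<and> (\<forall>i\<in>I. inj_on (\<psi> i) (gV (Hs i)))
   \<and> (\<forall>i\<in>I. map (\<psi> i) (gext (Hs i)) = map \<phi> (fst (es i)))
   \<and> (\<forall>i\<in>I. \<psi> i ` intn (Hs i) \<inter> \<phi> ` gV G = {})
   \<and> (\<forall>i\<in>I. \<forall>j\<in>I. i \<noteq> j \<longrightarrow> \<psi> i ` intn (Hs i) \<inter> \<psi> j ` intn (Hs j) = {})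
   \<and> gV X = \<phi> ` gV G \<union> (\<Union>i\<in>I. \<psi> i ` gV (Hs i))
   \<and> mset (gE X) = image_mset (emap \<phi>) (mset (gE G) - esum I es)
        + (\<Sum>i\<in>I. image_mset (emap (\<psi> i)) (mset (gE (Hs i))))
   \<and> gext X = map \<phi> (gext G)"

lemma decompD:
  assumes "decomp X G I es Hs \<phi> \<psi>"
  shows decomp_fin: "finite I"
   and decomp_sub: "esum I es \<subseteq># mset (gE G)"
   and decomp_sG: "hg_struct G" and decomp_sH: "\<And>i. i\<in>I \<Longrightarrow> hg_struct (Hs i)"
   and decomp_iphi: "inj_on \<phi> (gV G)" and decomp_ipsi: "\<And>i. i\<in>I \<Longrightarrow> inj_on (\<psi> i) (gV (Hs i))"
   and decomp_ext: "\<And>i. i\<in>I \<Longrightarrow> map (\<psi> i) (gext (Hs i)) = map \<phi> (fst (es i))"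
   and decomp_disj1: "\<And>i. i\<in>I \<Longrightarrow> \<psi> i ` intn (Hs i) \<inter> \<phi> ` gV G = {}"
   and decomp_disj2: "\<And>i j. i\<in>I \<Longrightarrow> j\<in>I \<Longrightarrow> i \<noteq> j \<Longrightarrow> \<psi> i ` intn (Hs i) \<inter> \<psi> j ` intn (Hs j) = {}"
   and decomp_V: "gV X = \<phi> ` gV G \<union> (\<Union>i\<in>I. \<psi> i ` gV (Hs i))"
   and decomp_E: "mset (gE X) = image_mset (emap \<phi>) (mset (gE G) - esum I es)
        + (\<Sum>i\<in>I. image_mset (emap (\<psi> i)) (mset (gE (Hs i))))"
   and decomp_x: "gext X = map \<phi> (gext G)"
  using assms unfolding decomp_def by simp_all

lemma decompI:
  assumes "finite I" "esum I es \<subseteq># mset (gE G)" "hg_struct G" "\<And>i. i\<in>I \<Longrightarrow> hg_struct (Hs i)"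
    "inj_on \<phi> (gV G)" "\<And>i. i\<in>I \<Longrightarrow> inj_on (\<psi> i) (gV (Hs i))"
    "\<And>i. i\<in>I \<Longrightarrow> map (\<psi> i) (gext (Hs i)) = map \<phi> (fst (es i))"
    "\<And>i. i\<in>I \<Longrightarrow> \<psi> i ` intn (Hs i) \<inter> \<phi> ` gV G = {}"
    "\<And>i j. i\<in>I \<Longrightarrow> j\<in>I \<Longrightarrow> i \<noteq> j \<Longrightarrow> \<psi> i ` intn (Hs i) \<inter> \<psi> j ` intn (Hs j) = {}"
    "gV X = \<phi> ` gV G \<union> (\<Union>i\<in>I. \<psi> i ` gV (Hs i))"
    "mset (gE X) = image_mset (emap \<phi>) (mset (gE G) - esum I es)
        + (\<Sum>i\<in>I. image_mset (emap (\<psi> i)) (mset (gE (Hs i))))"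
    "gext X = map \<phi> (gext G)"
  shows "decomp X G I es Hs \<phi> \<psi>"
  unfolding decomp_def
  by (intro conjI ballI impI) (simp_all add: assms)

lemma image_mset_sum: "image_mset f (sum g A) = (\<Sum>x\<in>A. image_mset f (g x))"
  by (induct A rule: infinite_finite_induct) auto

lemma esum_in: "finite I \<Longrightarrow> i \<in> I \<Longrightarrow> es i \<in># esum I es"
  unfolding esum_def by (induct I rule: finite_induct) auto

lemma in_sum_mset: "finite I \<Longrightarrow> x \<in># (\<Sum>i\<in>I. M i) \<Longrightarrow> \<exists>i\<in>I. x \<in># M i"
  by (induct I rule: finite_induct) auto

lemma in_sum_msetI: "finite I \<Longrightarrow> i \<in> I \<Longrightarrow> x \<in># M i \<Longrightarrow> x \<in># (\<Sum>i\<in>I. M i)"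
  by (induct I rule: finite_induct) auto

lemma hg_struct_edge:
  "hg_struct G \<Longrightarrow> x \<in> set (gE G) \<Longrightarrow> distinct (fst x) \<and> set (fst x) \<subseteq> gV G"
proof -
  assume a: "hg_struct G" "x \<in> set (gE G)"
  obtain a l where x: "x = (a, l)" by (cases x)
  from a have "\<forall>(a, l) \<in> set (gE G). distinct a \<and> set a \<subseteq> gV G" unfolding hg_struct_def by blast
  with a(2) show ?thesis unfolding x by auto
qed

lemma decomp_es:
  assumes "decomp X G I es Hs \<phi> \<psi>" "i \<in> I"
  shows "es i \<in> set (gE G)"
proof -
  have m: "es i \<in># esum I es" by (rule esum_in[OF decomp_fin[OF assms(1)] assms(2)])
  have "es i \<in># mset (gE G)" by (rule mset_subset_eqD[OF decomp_sub[OF assms(1)] m])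
  then show ?thesis by simp
qed

lemma decomp_loc:
  assumes "decomp X G I es Hs \<phi> \<psi>" "x \<in> set (gE X)"
  shows "(\<exists>y. y \<in># mset (gE G) - esum I es \<and> x = emap \<phi> y)
     \<or> (\<exists>i\<in>I. \<exists>y\<in>set (gE (Hs i)). x = emap (\<psi> i) y)"
proof -
  have fin: "finite I" by (rule decomp_fin[OF assms(1)])
  have "x \<in># mset (gE X)" using assms by simp
  then have "x \<in># image_mset (emap \<phi>) (mset (gE G) - esum I es)
        \<or> x \<in># (\<Sum>i\<in>I. image_mset (emap (\<psi> i)) (mset (gE (Hs i))))"
    unfolding decomp_E[OF assms(1)] by simp
  then show ?thesis
  proof
    assume "x \<in># image_mset (emap \<phi>) (mset (gE G) - esum I es)"
    then show ?thesis by auto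
  next
    assume "x \<in># (\<Sum>i\<in>I. image_mset (emap (\<psi> i)) (mset (gE (Hs i))))"
    from in_sum_mset[OF fin this] show ?thesis by auto
  qed
qed

lemma decomp_ext_sub:
  assumes "decomp X G I es Hs \<phi> \<psi>" "i \<in> I"
  shows "\<psi> i ` set (gext (Hs i)) \<subseteq> \<phi> ` gV G"
proof -
  have "\<psi> i ` set (gext (Hs i)) = set (map \<phi> (fst (es i)))"
    using decomp_ext[OF assms] by (metis set_map)
  also have "\<dots> \<subseteq> \<phi> ` gV G" using hg_struct_edge[OF decomp_sG[OF assms(1)] decomp_es[OF assms]]
    by auto
  finally show ?thesis .
qed

lemma decomp_struct:
  assumes d: "decomp X G I es Hs \<phi> \<psi>"
  shows "hg_struct X"
proof -
  have fin: "finite I" and sG: "hg_struct G" and sH: "\<forall>i\<in>I. hg_struct (Hs i)"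
    and iphi: "inj_on \<phi> (gV G)" and ipsi: "\<forall>i\<in>I. inj_on (\<psi> i) (gV (Hs i))"
    and V: "gV X = \<phi> ` gV G \<union> (\<Union>i\<in>I. \<psi> i ` gV (Hs i))"
    and x: "gext X = map \<phi> (gext G)"
    using decompD[OF d] by auto
  have "finite (gV X)" using V fin sG sH unfolding hg_struct_def by auto
  moreover have "\<forall>(a, l)\<in>set (gE X). distinct a \<and> set a \<subseteq> gV X"
  proof (clarify)
    fix a l assume al: "(a, l) \<in> set (gE X)"
    from decomp_loc[OF d al] show "distinct a \<and> set a \<subseteq> gV X"
    proof
      assume "\<exists>y. y \<in># mset (gE G) - esum I es \<and> (a, l) = emap \<phi> y"
      then obtain y where y: "y \<in> set (gE G)" "(a, l) = emap \<phi> y"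
        by (metis in_diffD set_mset_mset)
      with hg_struct_edge[OF sG y(1)] iphi show ?thesis
        by (auto simp: V distinct_map emap_def intro: inj_on_subset)
    next
      assume "\<exists>i\<in>I. \<exists>y\<in>set (gE (Hs i)). (a, l) = emap (\<psi> i) y"
      then obtain i y where y: "i \<in> I" "y \<in> set (gE (Hs i))" "(a, l) = emap (\<psi> i) y" by blast
      have s: "distinct (fst y) \<and> set (fst y) \<subseteq> gV (Hs i)" using hg_struct_edge[OF _ y(2)] sH y(1) by blast
      have sub: "\<psi> i ` gV (Hs i) \<subseteq> gV X" using V y(1) by blast
      have "distinct a" using s y ipsi by (auto simp: distinct_map emap_def intro: inj_on_subset)
      moreover have "set a \<subseteq> gV X" using s y sub by (auto simp: emap_def)
      ultimately show ?thesis by blast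
    qed
  qed
  moreover have "distinct (gext X) \<and> set (gext X) \<subseteq> gV X"
    using sG iphi unfolding x V hg_struct_def by (auto simp: distinct_map intro: inj_on_subset)
  ultimately show ?thesis unfolding hg_struct_def by blast
qed

definition wf_edges :: "(nat list \<times> tp) multiset \<Rightarrow> bool" where
  "wf_edges M \<longleftrightarrow> (\<forall>x\<in>#M. wf_tp (snd x) \<and> length (fst x) = ttype (snd x))"

lemma wfg_alt: "wfg G \<longleftrightarrow> hg_struct G \<and> wf_edges (mset (gE G))"
  unfolding wfg_def wf_edges_def by fastforce

lemma decomp_wfg:
  assumes d: "decomp X G I es Hs \<phi> \<psi>" and w: "wf_edges (mset (gE G) - esum I es)"
    and wH: "\<forall>i\<in>I. wfg (Hs i)"
  shows "wfg X"
proof -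
  have fin: "finite I" by (rule decomp_fin[OF d])
  have "wf_edges (mset (gE X))"
    unfolding wf_edges_def
  proof
    fix x assume "x \<in># mset (gE X)"
    from decomp_loc[OF d] this show "wf_tp (snd x) \<and> length (fst x) = ttype (snd x)"
      using w wH unfolding wf_edges_def wfg_alt by fastforce
  qed
  then show ?thesis using decomp_struct[OF d] wfg_alt by blast
qed


lemma sum_list_map_upt: "sum_list (map g [0..<n]) = (\<Sum>i<n. g i)"
  by (induct n) auto

lemma enumerate0: "enumerate 0 xs = map (\<lambda>i. (i, xs ! i)) [0..<length xs]"
  by (rule nth_equalityI) (auto simp: nth_enumerate_eq)

lemma mset_nth_sum: "mset xs = esum {..<length xs} (\<lambda>i. xs ! i)"
proof (induct xs rule: rev_induct)
  case Nil
  show ?case by (simp add: esum_def)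
next
  case (snoc x xs)
  have "esum {..<length (xs @ [x])} (\<lambda>i. (xs @ [x]) ! i)
      = esum {..<length xs} (\<lambda>i. (xs @ [x]) ! i) + {#x#}"
    unfolding esum_def by simp
  also have "esum {..<length xs} (\<lambda>i. (xs @ [x]) ! i) = esum {..<length xs} (\<lambda>i. xs ! i)"
    unfolding esum_def by (rule sum.cong) (auto simp: nth_append)
  finally show ?case using snoc by simp
qed

lemma esum_split: "finite B \<Longrightarrow> A \<subseteq> B \<Longrightarrow> esum B es = esum A es + esum (B - A) es"
  unfolding esum_def by (metis add.commute sum.subset_diff)

lemma esum_image: "image_mset f (esum A es) = esum A (f \<circ> es)"
  unfolding esum_def image_mset_sum by simp

lemma g_node_inj: "inj g_node"
  by (auto simp: g_node_def inj_def)

lemma h_node_ext: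
  assumes "length (gext H) = length a" "distinct (gext H)" "j < length a"
  shows "h_node i H a (gext H ! j) = g_node (a ! j)"
  using assms by (simp add: h_node_def map_of_zip_nth)

lemma h_node_int:
  assumes "length (gext H) = length a" "w \<notin> set (gext H)"
  shows "h_node i H a w = prod_encode (Suc i, w)"
proof -
  have "map_of (zip (gext H) a) w = None" using assms by simp
  then show ?thesis by (simp add: h_node_def)
qed

lemma h_node_map_ext:
  assumes "length (gext H) = length a" "distinct (gext H)"
  shows "map (h_node i H a) (gext H) = map g_node a"
  by (rule nth_equalityI) (use assms h_node_ext in auto)

lemma h_node_image:
  assumes "length (gext H) = length a" "distinct (gext H)" "set (gext H) \<subseteq> gV H"
  shows "h_node i H a ` gV H = (\<lambda>w. prod_encode (Suc i, w)) ` (gV H - set (gext H)) \<union> g_node ` set a"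
proof
  show "h_node i H a ` gV H \<subseteq> (\<lambda>w. prod_encode (Suc i, w)) ` (gV H - set (gext H)) \<union> g_node ` set a"
  proof
    fix x assume "x \<in> h_node i H a ` gV H"
    then obtain w where w: "w \<in> gV H" "x = h_node i H a w" by blast
    show "x \<in> (\<lambda>w. prod_encode (Suc i, w)) ` (gV H - set (gext H)) \<union> g_node ` set a"
    proof (cases "w \<in> set (gext H)")
      case True
      then obtain j where "j < length (gext H)" "w = gext H ! j" by (metis in_set_conv_nth)
      then show ?thesis using w assms h_node_ext[of H a j i] by auto
    next
      case False
      then show ?thesis using w assms h_node_int[of H a w i] by auto
    qed
  qed
next
  show "(\<lambda>w. prod_encode (Suc i, w)) ` (gV H - set (gext H)) \<union> g_node ` set a \<subseteq> h_node i H a ` gV H"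
  proof
    fix x assume "x \<in> (\<lambda>w. prod_encode (Suc i, w)) ` (gV H - set (gext H)) \<union> g_node ` set a"
    then show "x \<in> h_node i H a ` gV H"
    proof
      assume "x \<in> (\<lambda>w. prod_encode (Suc i, w)) ` (gV H - set (gext H))"
      then obtain w where "w \<in> gV H" "w \<notin> set (gext H)" "x = prod_encode (Suc i, w)" by blast
      then show ?thesis using assms h_node_int[of H a w i] by (metis image_eqI)
    next
      assume "x \<in> g_node ` set a"
      then obtain j where j: "j < length a" "x = g_node (a ! j)" by (metis imageE in_set_conv_nth)
      then have "x = h_node i H a (gext H ! j)" using assms h_node_ext by metis
      moreover have "gext H ! j \<in> gV H" using assms j by auto
      ultimately show ?thesis by blast
    qed
  qed
qed

lemma h_node_inj:
  assumes "length (gext H) = length a" "distinct (gext H)" "distinct a"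
  shows "inj_on (h_node i H a) (gV H)"
proof
  fix x y assume xy: "x \<in> gV H" "y \<in> gV H" "h_node i H a x = h_node i H a y"
  show "x = y"
  proof (cases "x \<in> set (gext H)"; cases "y \<in> set (gext H)")
    assume "x \<in> set (gext H)" "y \<in> set (gext H)"
    then obtain j k where "j < length a" "x = gext H ! j" "k < length a" "y = gext H ! k"
      using assms(1) by (metis in_set_conv_nth)
    then show ?thesis using xy assms h_node_ext[of H a _ i] g_node_inj
      by (metis inj_eq nth_eq_iff_index_eq)
  next
    assume "x \<in> set (gext H)" "y \<notin> set (gext H)"
    then obtain j where "j < length a" "x = gext H ! j" using assms(1) by (metis in_set_conv_nth)
    then show ?thesis using xy assms h_node_ext[of H a _ i] h_node_int[of H a y i] \<open>y \<notin> _\<close>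
      by (simp add: g_node_def)
  next
    assume "x \<notin> set (gext H)" "y \<in> set (gext H)"
    then obtain j where "j < length a" "y = gext H ! j" using assms(1) by (metis in_set_conv_nth)
    then show ?thesis using xy assms h_node_ext[of H a _ i] h_node_int[of H a x i] \<open>x \<notin> _\<close>
      by (simp add: g_node_def)
  next
    assume "x \<notin> set (gext H)" "y \<notin> set (gext H)"
    then show ?thesis using xy assms h_node_int[of H a x i] h_node_int[of H a y i] by simp
  qed
qed

lemma h_node_intn:
  assumes "length (gext H) = length a"
  shows "h_node i H a ` intn H = (\<lambda>w. prod_encode (Suc i, w)) ` intn H"
  using assms h_node_int unfolding intn_def by (metis (no_types, lifting) DiffD2 image_cong)

lemma mset_gE_repl:
  "mset (gE (repl G r)) = (\<Sum>i<length (gE G). case r i of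
       None \<Rightarrow> {#emap g_node (gE G ! i)#}
     | Some H \<Rightarrow> image_mset (emap (h_node i H (fst (gE G ! i)))) (mset (gE H)))"
proof -
  define F where "F = (\<lambda>(i, (a, l)). case r i of
                None \<Rightarrow> [(map g_node a, l)]
              | Some H \<Rightarrow> map (\<lambda>(b, l'). (map (h_node i H a) b, l')) (gE H))"
  have "gE (repl G r) = concat (map F (enumerate 0 (gE G)))"
    unfolding repl_def F_def by simp
  then have "mset (gE (repl G r)) = sum_list (map (\<lambda>i. mset (F (i, gE G ! i))) [0..<length (gE G)])"
    by (simp add: mset_concat enumerate0 comp_def)
  also have "\<dots> = (\<Sum>i<length (gE G). mset (F (i, gE G ! i)))" by (rule sum_list_map_upt)
  also have "\<dots> = (\<Sum>i<length (gE G). case r i of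
       None \<Rightarrow> {#emap g_node (gE G ! i)#}
     | Some H \<Rightarrow> image_mset (emap (h_node i H (fst (gE G ! i)))) (mset (gE H)))"
  proof (rule sum.cong[OF refl])
    fix i
    obtain a l where al: "gE G ! i = (a, l)" by (cases "gE G ! i")
    have e: "(\<lambda>(b, l'). (map h b, l')) = emap h" for h :: "nat \<Rightarrow> nat"
      by (auto simp: emap_def fun_eq_iff)
    show "mset (F (i, gE G ! i)) = (case r i of
       None \<Rightarrow> {#emap g_node (gE G ! i)#}
     | Some H \<Rightarrow> image_mset (emap (h_node i H (fst (gE G ! i)))) (mset (gE H)))"
      unfolding al F_def by (cases "r i") (simp_all add: e)
  qed
  finally show ?thesis .
qed

lemma repl_decomp:
  assumes sG: "hg_struct G"
    and tm: "\<And>i H. i < length (gE G) \<Longrightarrow> r i = Some H \<Longrightarrow> hg_struct H \<and> length (fst (gE G ! i)) = length (gext H)"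
  shows "decomp (repl G r) G {i. i < length (gE G) \<and> r i \<noteq> None} (\<lambda>i. gE G ! i) (\<lambda>i. the (r i))
           g_node (\<lambda>i. h_node i (the (r i)) (fst (gE G ! i)))"
proof -
  define n where "n = length (gE G)"
  define I where "I = {i. i < n \<and> r i \<noteq> None}"
  define \<psi> where "\<psi> = (\<lambda>i. h_node i (the (r i)) (fst (gE G ! i)))"
  have fin: "finite I" unfolding I_def by simp
  have IB: "I \<subseteq> {..<n}" unfolding I_def by auto
  have ms: "mset (gE G) = esum I (\<lambda>i. gE G ! i) + esum ({..<n} - I) (\<lambda>i. gE G ! i)"
  proof -
    have "mset (gE G) = esum {..<n} (\<lambda>i. gE G ! i)" unfolding n_def by (rule mset_nth_sum)
    also have "\<dots> = esum I (\<lambda>i. gE G ! i) + esum ({..<n} - I) (\<lambda>i. gE G ! i)"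
      by (rule esum_split[OF _ IB]) simp
    finally show ?thesis .
  qed
  have tmI: "hg_struct (the (r i)) \<and> length (fst (gE G ! i)) = length (gext (the (r i)))" if "i \<in> I" for i
    using tm that unfolding I_def n_def by auto
  have eG: "distinct (fst (gE G ! i)) \<and> set (fst (gE G ! i)) \<subseteq> gV G" if "i \<in> I" for i
    using hg_struct_edge[OF sG] that unfolding I_def n_def by auto
  have sH: "distinct (gext (the (r i))) \<and> set (gext (the (r i))) \<subseteq> gV (the (r i))
     \<and> finite (gV (the (r i)))" if "i \<in> I" for i
    using tmI[OF that] unfolding hg_struct_def by blast
  have img: "\<psi> i ` gV (the (r i)) = (\<lambda>w. prod_encode (Suc i, w)) ` intn (the (r i)) \<union> g_node ` set (fst (gE G ! i))"
    if "i \<in> I" for i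
    unfolding \<psi>_def intn_def by (rule h_node_image) (use tmI[OF that] sH[OF that] in auto)
  have imgi: "\<psi> i ` intn (the (r i)) = (\<lambda>w. prod_encode (Suc i, w)) ` intn (the (r i))" if "i \<in> I" for i
    unfolding \<psi>_def by (rule h_node_intn) (use tmI[OF that] in auto)
  have V: "gV (repl G r) = g_node ` gV G \<union> (\<Union>i\<in>I. \<psi> i ` gV (the (r i)))"
  proof -
    let ?P = "\<lambda>i. (\<lambda>w. prod_encode (Suc i, w)) ` intn (the (r i))"
    have u: "(\<Union>i\<in>{i. i < n}. case r i of None \<Rightarrow> {}
           | Some H \<Rightarrow> (\<lambda>w. prod_encode (Suc i, w)) ` (gV H - set (gext H))) = (\<Union>i\<in>I. ?P i)"
    proof (rule equalityI; rule subsetI)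
      fix x assume "x \<in> (\<Union>i\<in>{i. i < n}. case r i of None \<Rightarrow> {}
           | Some H \<Rightarrow> (\<lambda>w. prod_encode (Suc i, w)) ` (gV H - set (gext H)))"
      then obtain i where i: "i < n" "x \<in> (case r i of None \<Rightarrow> {}
           | Some H \<Rightarrow> (\<lambda>w. prod_encode (Suc i, w)) ` (gV H - set (gext H)))" by blast
      then obtain H where H: "r i = Some H" by (cases "r i") auto
      with i have "i \<in> I" "x \<in> ?P i" by (auto simp: I_def intn_def)
      then show "x \<in> (\<Union>i\<in>I. ?P i)" by blast
    next
      fix x assume "x \<in> (\<Union>i\<in>I. ?P i)"
      then obtain i where i: "i \<in> I" "x \<in> ?P i" by blast
      then obtain H where H: "r i = Some H" "i < n" unfolding I_def by auto
      with i have "x \<in> (case r i of None \<Rightarrow> {}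
           | Some H \<Rightarrow> (\<lambda>w. prod_encode (Suc i, w)) ` (gV H - set (gext H)))" by (auto simp: intn_def)
      with H show "x \<in> (\<Union>i\<in>{i. i < n}. case r i of None \<Rightarrow> {}
           | Some H \<Rightarrow> (\<lambda>w. prod_encode (Suc i, w)) ` (gV H - set (gext H)))" by blast
    qed
    have "gV (repl G r) = g_node ` gV G \<union> (\<Union>i\<in>{i. i < n}. case r i of None \<Rightarrow> {}
           | Some H \<Rightarrow> (\<lambda>w. prod_encode (Suc i, w)) ` (gV H - set (gext H)))"
      unfolding repl_def n_def by simp
    also have "\<dots> = g_node ` gV G \<union> (\<Union>i\<in>I. ?P i)" using u by simp
    also have "\<dots> = g_node ` gV G \<union> (\<Union>i\<in>I. \<psi> i ` gV (the (r i)))"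
    proof (rule equalityI; rule subsetI)
      fix x assume "x \<in> g_node ` gV G \<union> (\<Union>i\<in>I. ?P i)"
      then show "x \<in> g_node ` gV G \<union> (\<Union>i\<in>I. \<psi> i ` gV (the (r i)))"
        using img by blast
    next
      fix x assume "x \<in> g_node ` gV G \<union> (\<Union>i\<in>I. \<psi> i ` gV (the (r i)))"
      then consider "x \<in> g_node ` gV G" | i where "i \<in> I" "x \<in> \<psi> i ` gV (the (r i))" by blast
      then show "x \<in> g_node ` gV G \<union> (\<Union>i\<in>I. ?P i)"
      proof cases
        case 1 then show ?thesis by blast
      next
        case 2
        then have "x \<in> ?P i \<or> x \<in> g_node ` set (fst (gE G ! i))" using img by blast
        then show ?thesis using eG[OF 2(1)] 2(1) by blast
      qed
    qed
    finally show ?thesis .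
  qed
  have E: "mset (gE (repl G r)) = image_mset (emap g_node) (mset (gE G) - esum I (\<lambda>i. gE G ! i))
        + (\<Sum>i\<in>I. image_mset (emap (\<psi> i)) (mset (gE (the (r i)))))"
  proof -
    let ?F = "\<lambda>i. case r i of
       None \<Rightarrow> {#emap g_node (gE G ! i)#}
     | Some H \<Rightarrow> image_mset (emap (h_node i H (fst (gE G ! i)))) (mset (gE H))"
    have "mset (gE (repl G r)) = (\<Sum>i<n. ?F i)" unfolding n_def by (rule mset_gE_repl)
    also have "\<dots> = (\<Sum>i\<in>{..<n} - I. ?F i) + (\<Sum>i\<in>I. ?F i)"
      by (rule sum.subset_diff[OF IB finite_lessThan])
    also have "(\<Sum>i\<in>{..<n} - I. ?F i) = (\<Sum>i\<in>{..<n} - I. {#emap g_node (gE G ! i)#})"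
      by (rule sum.cong) (auto simp: I_def)
    also have "\<dots> = image_mset (emap g_node) (mset (gE G) - esum I (\<lambda>i. gE G ! i))"
    proof -
      have "mset (gE G) - esum I (\<lambda>i. gE G ! i) = esum ({..<n} - I) (\<lambda>i. gE G ! i)"
        using ms by (metis add_diff_cancel_left')
      then show ?thesis by (simp add: esum_def image_mset_sum)
    qed
    also have "(\<Sum>i\<in>I. ?F i) = (\<Sum>i\<in>I. image_mset (emap (\<psi> i)) (mset (gE (the (r i)))))"
      by (rule sum.cong) (auto simp: I_def \<psi>_def)
    finally show ?thesis .
  qed
  have inj1: "inj_on g_node (gV G)" using g_node_inj by (simp add: inj_on_def inj_def)
  have inj2: "inj_on (\<psi> i) (gV (the (r i)))" if "i \<in> I" for i
    unfolding \<psi>_def by (rule h_node_inj) (use tmI[OF that] sH[OF that] eG[OF that] in auto)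
  have ext: "map (\<psi> i) (gext (the (r i))) = map g_node (fst (gE G ! i))" if "i \<in> I" for i
    unfolding \<psi>_def by (rule h_node_map_ext) (use tmI[OF that] sH[OF that] in auto)
  have d1: "\<psi> i ` intn (the (r i)) \<inter> g_node ` gV G = {}" if "i \<in> I" for i
    unfolding imgi[OF that] by (auto simp: g_node_def)
  have d2: "\<psi> i ` intn (the (r i)) \<inter> \<psi> j ` intn (the (r j)) = {}" if "i \<in> I" "j \<in> I" "i \<noteq> j" for i j
    unfolding imgi[OF that(1)] imgi[OF that(2)] using that(3) by auto
  have sub: "esum I (\<lambda>i. gE G ! i) \<subseteq># mset (gE G)" unfolding ms by simp
  have x: "gext (repl G r) = map g_node (gext G)" by (simp add: repl_def)
  have "decomp (repl G r) G I (\<lambda>i. gE G ! i) (\<lambda>i. the (r i)) g_node \<psi>"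
    by (rule decompI[OF fin sub sG _ inj1 inj2 ext d1 d2 V E x]) (use tmI in blast)
  then show ?thesis unfolding I_def n_def \<psi>_def .
qed

lemma struct_edge_sub: "hg_struct H \<Longrightarrow> e \<in> set (gE H) \<Longrightarrow> set (fst e) \<subseteq> gV H"
  using hg_struct_edge by blast

lemma emap_cong: "(\<And>x. x \<in> set (fst e) \<Longrightarrow> f x = g x) \<Longrightarrow> emap f e = emap g e"
  by (simp add: emap_def)

lemma image_emap_cong:
  assumes "\<And>e. e \<in># M \<Longrightarrow> set (fst e) \<subseteq> A" "\<And>x. x \<in> A \<Longrightarrow> f x = g x"
  shows "image_mset (emap f) M = image_mset (emap g) M"
  by (rule image_mset_cong) (use assms in \<open>auto intro!: emap_cong\<close>)

lemma image_emap_comp: "image_mset (emap f) (image_mset (emap g) M) = image_mset (emap (f \<circ> g)) M"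
  by (simp add: image_mset.compositionality comp_def emap_comp)

lemma decomp_rep:
  assumes d: "decomp X G I es Hs \<phi> \<psi>" and z: "z \<in> gV X"
  shows "(\<exists>v\<in>gV G. z = \<phi> v) \<or> (\<exists>i\<in>I. \<exists>w\<in>intn (Hs i). z = \<psi> i w)"
proof -
  from z consider "z \<in> \<phi> ` gV G" | i where "i \<in> I" "z \<in> \<psi> i ` gV (Hs i)"
    unfolding decomp_V[OF d] by blast
  then show ?thesis
  proof cases
    case 1 then show ?thesis by blast
  next
    case 2
    then obtain w where w: "w \<in> gV (Hs i)" "z = \<psi> i w" by blast
    show ?thesis
    proof (cases "w \<in> set (gext (Hs i))")
      case True
      then have "z \<in> \<phi> ` gV G" using decomp_ext_sub[OF d 2(1)] w by blast
      then show ?thesis by blast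
    next
      case False
      then have "w \<in> intn (Hs i)" using w unfolding intn_def by blast
      then show ?thesis using 2(1) w by blast
    qed
  qed
qed

lemma decomp_psi_ext:
  assumes d: "decomp X G I es Hs \<phi> \<psi>" and i: "i \<in> I" and m: "m < length (gext (Hs i))"
  shows "\<psi> i (gext (Hs i) ! m) = \<phi> (fst (es i) ! m)" "m < length (fst (es i))"
    "fst (es i) ! m \<in> gV G"
proof -
  have e: "map (\<psi> i) (gext (Hs i)) = map \<phi> (fst (es i))" by (rule decomp_ext[OF d i])
  then have l: "length (fst (es i)) = length (gext (Hs i))" by (metis length_map)
  show "\<psi> i (gext (Hs i) ! m) = \<phi> (fst (es i) ! m)" using e m l by (metis nth_map)
  show "m < length (fst (es i))" using l m by simp
  show "fst (es i) ! m \<in> gV G"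
    using struct_edge_sub[OF decomp_sG[OF d] decomp_es[OF d i]] l m by auto
qed

definition glue :: "'l hgraph \<Rightarrow> 'i set \<Rightarrow> ('i \<Rightarrow> 'l hgraph) \<Rightarrow> (nat \<Rightarrow> nat) \<Rightarrow> ('i \<Rightarrow> nat \<Rightarrow> nat)
   \<Rightarrow> (nat \<Rightarrow> nat) \<Rightarrow> ('i \<Rightarrow> nat \<Rightarrow> nat) \<Rightarrow> nat \<Rightarrow> nat" where
  "glue G I Hs \<phi> \<psi> \<alpha> \<beta> z = (if z \<in> \<phi> ` gV G then \<alpha> (inv_into (gV G) \<phi> z)
     else (let i = (SOME i. i \<in> I \<and> z \<in> \<psi> i ` intn (Hs i)) in \<beta> i (inv_into (intn (Hs i)) (\<psi> i) z)))"

lemma glue_phi: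
  assumes d: "decomp X G I es Hs \<phi> \<psi>" and v: "v \<in> gV G"
  shows "glue G I Hs \<phi> \<psi> \<alpha> \<beta> (\<phi> v) = \<alpha> v"
  using v inv_into_f_f[OF decomp_iphi[OF d] v] by (simp add: glue_def)

lemma glue_psi_int:
  assumes d: "decomp X G I es Hs \<phi> \<psi>" and i: "i \<in> I" and w: "w \<in> intn (Hs i)"
  shows "glue G I Hs \<phi> \<psi> \<alpha> \<beta> (\<psi> i w) = \<beta> i w"
proof -
  have n: "\<psi> i w \<notin> \<phi> ` gV G" using decomp_disj1[OF d i] w by blast
  have u: "(SOME j. j \<in> I \<and> \<psi> i w \<in> \<psi> j ` intn (Hs j)) = i"
  proof (rule some_equality)
    show "i \<in> I \<and> \<psi> i w \<in> \<psi> i ` intn (Hs i)" using i w by blast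
  next
    fix j assume "j \<in> I \<and> \<psi> i w \<in> \<psi> j ` intn (Hs j)"
    then show "j = i" using decomp_disj2[OF d i, of j] w by blast
  qed
  have "inj_on (\<psi> i) (intn (Hs i))"
    using decomp_ipsi[OF d i] by (rule inj_on_subset) (auto simp: intn_def)
  then have "inv_into (intn (Hs i)) (\<psi> i) (\<psi> i w) = w" using w by (rule inv_into_f_f)
  then show ?thesis using n u by (simp add: glue_def Let_def)
qed

lemma glue_psi:
  assumes d: "decomp X G I es Hs \<phi> \<psi>" and i: "i \<in> I" and w: "w \<in> gV (Hs i)"
    and compat: "map (\<beta> i) (gext (Hs i)) = map \<alpha> (fst (es i))"
  shows "glue G I Hs \<phi> \<psi> \<alpha> \<beta> (\<psi> i w) = \<beta> i w"
proof (cases "w \<in> set (gext (Hs i))")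
  case True
  then obtain m where m: "m < length (gext (Hs i))" "w = gext (Hs i) ! m" by (metis in_set_conv_nth)
  note p = decomp_psi_ext[OF d i m(1)]
  have "glue G I Hs \<phi> \<psi> \<alpha> \<beta> (\<psi> i w) = \<alpha> (fst (es i) ! m)"
    using m p glue_phi[OF d p(3)] by simp
  also have "\<dots> = \<beta> i w" using compat m p(2) by (metis nth_map)
  finally show ?thesis .
next
  case False
  then show ?thesis using glue_psi_int[OF d i] w by (simp add: intn_def)
qed

lemma glue_image:
  assumes d: "decomp X G I es Hs \<phi> \<psi>"
    and compat: "\<And>i. i \<in> I \<Longrightarrow> map (\<beta> i) (gext (Hs i)) = map \<alpha> (fst (es i))"
  shows "glue G I Hs \<phi> \<psi> \<alpha> \<beta> ` gV X = \<alpha> ` gV G \<union> (\<Union>i\<in>I. \<beta> i ` gV (Hs i))"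
proof -
  let ?h = "glue G I Hs \<phi> \<psi> \<alpha> \<beta>"
  have "?h ` gV X = ?h ` \<phi> ` gV G \<union> (\<Union>i\<in>I. ?h ` \<psi> i ` gV (Hs i))"
    unfolding decomp_V[OF d] by (simp add: image_Un image_UN)
  also have "?h ` \<phi> ` gV G = \<alpha> ` gV G"
    using glue_phi[OF d] by (simp add: image_image cong: image_cong)
  also have "(\<Union>i\<in>I. ?h ` \<psi> i ` gV (Hs i)) = (\<Union>i\<in>I. \<beta> i ` gV (Hs i))"
  proof (rule SUP_cong[OF refl])
    fix i assume i: "i \<in> I"
    have "\<And>w. w \<in> gV (Hs i) \<Longrightarrow> ?h (\<psi> i w) = \<beta> i w"
      using glue_psi[OF d i] compat[OF i] by blast
    then show "?h ` \<psi> i ` gV (Hs i) = \<beta> i ` gV (Hs i)"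
      unfolding image_image by (rule image_cong[OF refl])
  qed
  finally show ?thesis .
qed

lemma glue_image_intn:
  assumes d: "decomp X G I es Hs \<phi> \<psi>"
  shows "glue G I Hs \<phi> \<psi> \<alpha> \<beta> ` intn X \<subseteq> \<alpha> ` intn G \<union> (\<Union>i\<in>I. \<beta> i ` intn (Hs i))"
proof
  fix y assume "y \<in> glue G I Hs \<phi> \<psi> \<alpha> \<beta> ` intn X"
  then obtain z where z: "z \<in> intn X" "y = glue G I Hs \<phi> \<psi> \<alpha> \<beta> z" by blast
  then have zV: "z \<in> gV X" and zx: "z \<notin> set (gext X)" unfolding intn_def by auto
  from decomp_rep[OF d zV] show "y \<in> \<alpha> ` intn G \<union> (\<Union>i\<in>I. \<beta> i ` intn (Hs i))"
  proof
    assume "\<exists>v\<in>gV G. z = \<phi> v"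
    then obtain v where v: "v \<in> gV G" "z = \<phi> v" by blast
    have "v \<notin> set (gext G)" using zx v unfolding decomp_x[OF d] by auto
    then have "v \<in> intn G" using v unfolding intn_def by blast
    then show ?thesis using z v glue_phi[OF d v(1)] by auto
  next
    assume "\<exists>i\<in>I. \<exists>w\<in>intn (Hs i). z = \<psi> i w"
    then obtain i w where "i \<in> I" "w \<in> intn (Hs i)" "z = \<psi> i w" by blast
    then show ?thesis using z glue_psi_int[OF d] by auto
  qed
qed

lemma glue_inj:
  assumes d: "decomp X G I es Hs \<phi> \<psi>"
    and compat: "\<And>i. i \<in> I \<Longrightarrow> map (\<beta> i) (gext (Hs i)) = map \<alpha> (fst (es i))"
    and ia: "inj_on \<alpha> (gV G)" and ib: "\<And>i. i \<in> I \<Longrightarrow> inj_on (\<beta> i) (gV (Hs i))"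
    and d1: "\<And>i. i \<in> I \<Longrightarrow> \<beta> i ` intn (Hs i) \<inter> \<alpha> ` gV G = {}"
    and d2: "\<And>i j. i \<in> I \<Longrightarrow> j \<in> I \<Longrightarrow> i \<noteq> j \<Longrightarrow> \<beta> i ` intn (Hs i) \<inter> \<beta> j ` intn (Hs j) = {}"
  shows "inj_on (glue G I Hs \<phi> \<psi> \<alpha> \<beta>) (gV X)"
proof
  let ?h = "glue G I Hs \<phi> \<psi> \<alpha> \<beta>"
  fix z1 z2 assume z: "z1 \<in> gV X" "z2 \<in> gV X" "?h z1 = ?h z2"
  have intV: "intn (Hs i) \<subseteq> gV (Hs i)" for i unfolding intn_def by blast
  from decomp_rep[OF d z(1)] decomp_rep[OF d z(2)] show "z1 = z2"
  proof (elim disjE bexE)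
    fix v1 v2 assume v: "v1 \<in> gV G" "z1 = \<phi> v1" "v2 \<in> gV G" "z2 = \<phi> v2"
    then have "\<alpha> v1 = \<alpha> v2" using z glue_phi[OF d] by simp
    then show ?thesis using v ia by (simp add: inj_on_eq_iff)
  next
    fix v1 i2 w2 assume v: "v1 \<in> gV G" "z1 = \<phi> v1" "i2 \<in> I" "w2 \<in> intn (Hs i2)" "z2 = \<psi> i2 w2"
    then have "\<alpha> v1 = \<beta> i2 w2" using z glue_phi[OF d] glue_psi_int[OF d] by simp
    then show ?thesis using v d1[of i2] by blast
  next
    fix v2 i1 w1 assume v: "v2 \<in> gV G" "z2 = \<phi> v2" "i1 \<in> I" "w1 \<in> intn (Hs i1)" "z1 = \<psi> i1 w1"
    then have "\<alpha> v2 = \<beta> i1 w1" using z glue_phi[OF d] glue_psi_int[OF d] by simp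
    then show ?thesis using v d1[of i1] by blast
  next
    fix i1 w1 i2 w2 assume v: "i1 \<in> I" "w1 \<in> intn (Hs i1)" "z1 = \<psi> i1 w1"
      "i2 \<in> I" "w2 \<in> intn (Hs i2)" "z2 = \<psi> i2 w2"
    then have e: "\<beta> i1 w1 = \<beta> i2 w2" using z glue_psi_int[OF d] by simp
    show ?thesis
    proof (cases "i1 = i2")
      case True
      then have "w1 = w2" using e v ib[of i1] intV by (metis inj_on_eq_iff subsetD)
      then show ?thesis using v True by simp
    next
      case False
      then show ?thesis using e v d2[of i1 i2] by blast
    qed
  qed
qed

lemma glue_edges:
  assumes d: "decomp X G I es Hs \<phi> \<psi>"
    and compat: "\<And>i. i \<in> I \<Longrightarrow> map (\<beta> i) (gext (Hs i)) = map \<alpha> (fst (es i))"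
  shows "image_mset (emap (glue G I Hs \<phi> \<psi> \<alpha> \<beta>)) (mset (gE X))
     = image_mset (emap \<alpha>) (mset (gE G) - esum I es) + (\<Sum>i\<in>I. image_mset (emap (\<beta> i)) (mset (gE (Hs i))))"
proof -
  let ?h = "glue G I Hs \<phi> \<psi> \<alpha> \<beta>"
  have "image_mset (emap ?h) (mset (gE X)) = image_mset (emap ?h) (image_mset (emap \<phi>) (mset (gE G) - esum I es))
        + (\<Sum>i\<in>I. image_mset (emap ?h) (image_mset (emap (\<psi> i)) (mset (gE (Hs i)))))"
    unfolding decomp_E[OF d] by (simp add: image_mset_sum)
  also have "image_mset (emap ?h) (image_mset (emap \<phi>) (mset (gE G) - esum I es))
      = image_mset (emap \<alpha>) (mset (gE G) - esum I es)"
  proof -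
    have "set (fst e) \<subseteq> gV G" if "e \<in># mset (gE G) - esum I es" for e
    proof -
      have "e \<in> set (gE G)" using that by (metis in_diffD set_mset_mset)
      then show ?thesis by (rule struct_edge_sub[OF decomp_sG[OF d]])
    qed
    then show ?thesis unfolding image_emap_comp
      by (rule image_emap_cong[where A = "gV G"]) (use glue_phi[OF d] in auto)
  qed
  also have "(\<Sum>i\<in>I. image_mset (emap ?h) (image_mset (emap (\<psi> i)) (mset (gE (Hs i)))))
      = (\<Sum>i\<in>I. image_mset (emap (\<beta> i)) (mset (gE (Hs i))))"
  proof (rule sum.cong[OF refl])
    fix i assume i: "i \<in> I"
    show "image_mset (emap ?h) (image_mset (emap (\<psi> i)) (mset (gE (Hs i)))) = image_mset (emap (\<beta> i)) (mset (gE (Hs i)))"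
    proof -
      have hw: "\<And>w. w \<in> gV (Hs i) \<Longrightarrow> ?h (\<psi> i w) = \<beta> i w"
        using glue_psi[OF d i] compat[OF i] by blast
      show ?thesis unfolding image_emap_comp
        by (rule image_emap_cong[where A = "gV (Hs i)"])
           (use struct_edge_sub[OF decomp_sH[OF d i]] hw in auto)
    qed
  qed
  finally show ?thesis .
qed


lemma hiso_intn:
  assumes h: "hiso H H' f" and s: "hg_struct H"
  shows "f ` intn H = intn H'"
proof -
  have b: "bij_betw f (gV H) (gV H')" and x: "gext H' = map f (gext H)" using h unfolding hiso_def by auto
  have "set (gext H) \<subseteq> gV H" using s unfolding hg_struct_def by blast
  then have "f ` (gV H - set (gext H)) = f ` gV H - f ` set (gext H)"
    using bij_betw_imp_inj_on[OF b] by (intro inj_on_image_set_diff) auto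
  then show ?thesis using b x unfolding intn_def bij_betw_def by simp
qed

lemma emap_id[simp]: "emap id = id"
  by (auto simp: emap_def fun_eq_iff)

lemma hiso_refl: "hiso H H id"
  unfolding hiso_def by simp

lemma decomp_unique:
  assumes d: "decomp X G I es Hs \<phi> \<psi>" and d': "decomp X' G' I es' Hs' \<phi>' \<psi>'"
    and g: "hiso G G' g" and ee: "\<And>i. i \<in> I \<Longrightarrow> es' i = emap g (es i)"
    and hh: "\<And>i. i \<in> I \<Longrightarrow> hiso (Hs i) (Hs' i) (f i)"
  shows "hg_iso X X'"
proof -
  define \<alpha> where "\<alpha> = \<phi>' \<circ> g"
  define \<beta> where "\<beta> = (\<lambda>i. \<psi>' i \<circ> f i)"
  let ?h = "glue G I Hs \<phi> \<psi> \<alpha> \<beta>"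
  have gb: "bij_betw g (gV G) (gV G')" and gE': "mset (gE G') = image_mset (emap g) (mset (gE G))"
    and gx: "gext G' = map g (gext G)" using g unfolding hiso_def by auto
  have fb: "bij_betw (f i) (gV (Hs i)) (gV (Hs' i))"
    and fE: "mset (gE (Hs' i)) = image_mset (emap (f i)) (mset (gE (Hs i)))"
    and fx: "gext (Hs' i) = map (f i) (gext (Hs i))" if "i \<in> I" for i
    using hh[OF that] unfolding hiso_def by auto
  have compat: "map (\<beta> i) (gext (Hs i)) = map \<alpha> (fst (es i))" if i: "i \<in> I" for i
  proof -
    have "map (\<beta> i) (gext (Hs i)) = map (\<psi>' i) (gext (Hs' i))" unfolding \<beta>_def fx[OF i] by simp
    also have "\<dots> = map \<phi>' (fst (es' i))" by (rule decomp_ext[OF d' i])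
    also have "\<dots> = map \<alpha> (fst (es i))" unfolding ee[OF i] \<alpha>_def by simp
    finally show ?thesis .
  qed
  have aimg: "\<alpha> ` gV G = \<phi>' ` gV G'" unfolding \<alpha>_def using gb by (metis bij_betw_imp_surj_on image_comp)
  have bimg: "\<beta> i ` gV (Hs i) = \<psi>' i ` gV (Hs' i)" if "i \<in> I" for i
    unfolding \<beta>_def using fb[OF that] by (metis bij_betw_imp_surj_on image_comp)
  have bint: "\<beta> i ` intn (Hs i) = \<psi>' i ` intn (Hs' i)" if "i \<in> I" for i
    unfolding \<beta>_def using hiso_intn[OF hh[OF that] decomp_sH[OF d that]] by (metis image_comp)
  have ia: "inj_on \<alpha> (gV G)" unfolding \<alpha>_def
    using gb decomp_iphi[OF d'] by (auto simp: bij_betw_def intro: comp_inj_on)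
  have ib: "inj_on (\<beta> i) (gV (Hs i))" if "i \<in> I" for i unfolding \<beta>_def
    using fb[OF that] decomp_ipsi[OF d' that] by (auto simp: bij_betw_def intro: comp_inj_on)
  have d1: "\<beta> i ` intn (Hs i) \<inter> \<alpha> ` gV G = {}" if "i \<in> I" for i
    unfolding bint[OF that] aimg by (rule decomp_disj1[OF d' that])
  have d2: "\<beta> i ` intn (Hs i) \<inter> \<beta> j ` intn (Hs j) = {}" if "i \<in> I" "j \<in> I" "i \<noteq> j" for i j
    unfolding bint[OF that(1)] bint[OF that(2)] by (rule decomp_disj2[OF d' that])
  have hinj: "inj_on ?h (gV X)" by (rule glue_inj[OF d compat ia ib d1 d2])
  have "?h ` gV X = \<alpha> ` gV G \<union> (\<Union>i\<in>I. \<beta> i ` gV (Hs i))" by (rule glue_image[OF d compat])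
  also have "\<dots> = \<phi>' ` gV G' \<union> (\<Union>i\<in>I. \<psi>' i ` gV (Hs' i))"
    using aimg bimg by simp
  finally have himg: "?h ` gV X = gV X'" unfolding decomp_V[OF d'] .
  have A: "esum I es \<subseteq># mset (gE G)" by (rule decomp_sub[OF d])
  have A': "esum I es' = image_mset (emap g) (esum I es)"
    unfolding esum_def image_mset_sum by (rule sum.cong) (auto simp: ee)
  have "mset (gE X') = image_mset (emap \<phi>') (mset (gE G') - esum I es')
        + (\<Sum>i\<in>I. image_mset (emap (\<psi>' i)) (mset (gE (Hs' i))))" by (rule decomp_E[OF d'])
  also have "image_mset (emap \<phi>') (mset (gE G') - esum I es') = image_mset (emap \<alpha>) (mset (gE G) - esum I es)"
    unfolding gE' A' image_mset_Diff[OF A, symmetric] image_emap_comp \<alpha>_def ..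
  also have "(\<Sum>i\<in>I. image_mset (emap (\<psi>' i)) (mset (gE (Hs' i))))
     = (\<Sum>i\<in>I. image_mset (emap (\<beta> i)) (mset (gE (Hs i))))"
    by (rule sum.cong[OF refl]) (simp add: fE image_emap_comp \<beta>_def)
  finally have E: "mset (gE X') = image_mset (emap ?h) (mset (gE X))"
    using glue_edges[OF d compat] by simp
  have "map ?h (gext X) = map \<alpha> (gext G)"
  proof -
    have "set (gext G) \<subseteq> gV G" using decomp_sG[OF d] unfolding hg_struct_def by blast
    then show ?thesis unfolding decomp_x[OF d] using glue_phi[OF d] by auto
  qed
  then have x: "gext X' = map ?h (gext X)" unfolding decomp_x[OF d'] gx \<alpha>_def by simp
  have "hiso X X' ?h" unfolding hiso_def bij_betw_def using hinj himg E x by blast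
  then show ?thesis unfolding hg_iso_iff by blast
qed

lemma decomp_reindex:
  assumes d: "decomp X G I es Hs \<phi> \<psi>" and t: "bij_betw \<tau> I' I"
  shows "decomp X G I' (es \<circ> \<tau>) (Hs \<circ> \<tau>) \<phi> (\<psi> \<circ> \<tau>)"
proof (rule decompI)
  have im: "\<tau> ` I' = I" and it: "inj_on \<tau> I'" using t by (auto simp: bij_betw_def)
  show "finite I'" using decomp_fin[OF d] t bij_betw_finite by blast
  have es: "esum I' (es \<circ> \<tau>) = esum I es" unfolding esum_def
    using sum.reindex_bij_betw[OF t, of "\<lambda>i. {#es i#}"] by simp
  show "esum I' (es \<circ> \<tau>) \<subseteq># mset (gE G)" unfolding es by (rule decomp_sub[OF d])
  show "hg_struct G" by (rule decomp_sG[OF d])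
  show "hg_struct ((Hs \<circ> \<tau>) i)" if "i \<in> I'" for i using decomp_sH[OF d] that im by auto
  show "inj_on \<phi> (gV G)" by (rule decomp_iphi[OF d])
  show "inj_on ((\<psi> \<circ> \<tau>) i) (gV ((Hs \<circ> \<tau>) i))" if "i \<in> I'" for i using decomp_ipsi[OF d] that im by auto
  show "map ((\<psi> \<circ> \<tau>) i) (gext ((Hs \<circ> \<tau>) i)) = map \<phi> (fst ((es \<circ> \<tau>) i))" if "i \<in> I'" for i
    using decomp_ext[OF d] that im by auto
  show "(\<psi> \<circ> \<tau>) i ` intn ((Hs \<circ> \<tau>) i) \<inter> \<phi> ` gV G = {}" if "i \<in> I'" for i
    using decomp_disj1[OF d] that im by auto
  show "(\<psi> \<circ> \<tau>) i ` intn ((Hs \<circ> \<tau>) i) \<inter> (\<psi> \<circ> \<tau>) j ` intn ((Hs \<circ> \<tau>) j) = {}"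
    if "i \<in> I'" "j \<in> I'" "i \<noteq> j" for i j
  proof -
    have "\<tau> i \<noteq> \<tau> j" using it that by (meson inj_on_eq_iff)
    then show ?thesis using decomp_disj2[OF d, of "\<tau> i" "\<tau> j"] that im by auto
  qed
  have "(\<Union>i\<in>I'. (\<psi> \<circ> \<tau>) i ` gV ((Hs \<circ> \<tau>) i)) = (\<Union>j\<in>\<tau> ` I'. \<psi> j ` gV (Hs j))" by auto
  then show "gV X = \<phi> ` gV G \<union> (\<Union>i\<in>I'. (\<psi> \<circ> \<tau>) i ` gV ((Hs \<circ> \<tau>) i))"
    unfolding decomp_V[OF d] im by simp
  show "mset (gE X) = image_mset (emap \<phi>) (mset (gE G) - esum I' (es \<circ> \<tau>))
        + (\<Sum>i\<in>I'. image_mset (emap ((\<psi> \<circ> \<tau>) i)) (mset (gE ((Hs \<circ> \<tau>) i))))"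
    unfolding es decomp_E[OF d]
    using sum.reindex_bij_betw[OF t, of "\<lambda>i. image_mset (emap (\<psi> i)) (mset (gE (Hs i)))"] by simp
  show "gext X = map \<phi> (gext G)" by (rule decomp_x[OF d])
qed


lemma sum_Inl_Inr:
  assumes "finite I" "finite J"
  shows "(\<Sum>x\<in>Inl ` I \<union> Inr ` J. h x) = (\<Sum>i\<in>I. h (Inl i)) + (\<Sum>j\<in>J. h (Inr j))"
proof -
  have "(\<Sum>x\<in>Inl ` I \<union> Inr ` J. h x) = (\<Sum>x\<in>Inl ` I. h x) + (\<Sum>x\<in>Inr ` J. h x)"
    by (rule sum.union_disjoint) (use assms in auto)
  also have "(\<Sum>x\<in>Inl ` I. h x) = (\<Sum>i\<in>I. h (Inl i))" by (simp add: sum.reindex)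
  also have "(\<Sum>x\<in>Inr ` J. h x) = (\<Sum>j\<in>J. h (Inr j))" by (simp add: sum.reindex)
  finally show ?thesis .
qed

lemma Inl_Inr_cases:
  assumes "x \<in> Inl ` I \<union> Inr ` J" "\<And>i. i \<in> I \<Longrightarrow> P (Inl i)" "\<And>j. j \<in> J \<Longrightarrow> P (Inr j)"
  shows "P x"
  using assms by blast

lemma decomp_VG: "decomp X G I es Hs \<phi> \<psi> \<Longrightarrow> \<phi> ` gV G \<subseteq> gV X"
  using decomp_V by blast

lemma decomp_VH: "decomp X G I es Hs \<phi> \<psi> \<Longrightarrow> i \<in> I \<Longrightarrow> \<psi> i ` gV (Hs i) \<subseteq> gV X"
  using decomp_V by blast

lemma intn_sub: "intn H \<subseteq> gV H" unfolding intn_def by blast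

lemma esum_emap:
  assumes "\<And>j. j \<in> J \<Longrightarrow> fs j = emap f (gs j)"
  shows "esum J fs = image_mset (emap f) (esum J gs)"
  unfolding esum_def image_mset_sum by (rule sum.cong) (auto simp: assms)

lemma decomp_comp_out:
  assumes d1: "decomp Y G I es Hs \<phi> \<psi>" and d2: "decomp X Y J fs Ks \<phi>2 \<psi>2"
    and fg: "\<And>j. j \<in> J \<Longrightarrow> fs j = emap \<phi> (gs j)"
    and gsub: "esum J gs \<subseteq># mset (gE G) - esum I es"
  shows "decomp X G (Inl ` I \<union> Inr ` J) (case_sum es gs) (case_sum Hs Ks) (\<phi>2 \<circ> \<phi>)
           (case_sum (\<lambda>i. \<phi>2 \<circ> \<psi> i) \<psi>2)"
proof (rule decompI)
  have fI: "finite I" by (rule decomp_fin[OF d1])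
  have fJ: "finite J" by (rule decomp_fin[OF d2])
  have iY: "inj_on \<phi>2 (gV Y)" by (rule decomp_iphi[OF d2])
  have GY: "\<phi> ` gV G \<subseteq> gV Y" by (rule decomp_VG[OF d1])
  have HY: "\<psi> i ` gV (Hs i) \<subseteq> gV Y" if "i \<in> I" for i by (rule decomp_VH[OF d1 that])
  have es: "esum (Inl ` I \<union> Inr ` J) (case_sum es gs) = esum I es + esum J gs"
    unfolding esum_def by (simp add: sum_Inl_Inr[OF fI fJ])
  have A: "esum I es \<subseteq># mset (gE G)" by (rule decomp_sub[OF d1])
  show "finite (Inl ` I \<union> Inr ` J)" using fI fJ by simp
  show "esum (Inl ` I \<union> Inr ` J) (case_sum es gs) \<subseteq># mset (gE G)"
    unfolding es using gsub A by (metis subset_mset.le_diff_conv2 add.commute)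
  show "hg_struct G" by (rule decomp_sG[OF d1])
  show "hg_struct (case_sum Hs Ks x)" if "x \<in> Inl ` I \<union> Inr ` J" for x
    using that by (rule Inl_Inr_cases) (simp_all add: decomp_sH[OF d1] decomp_sH[OF d2])
  show "inj_on (\<phi>2 \<circ> \<phi>) (gV G)"
    using decomp_iphi[OF d1] iY GY by (auto intro: comp_inj_on inj_on_subset)
  show "inj_on (case_sum (\<lambda>i. \<phi>2 \<circ> \<psi> i) \<psi>2 x) (gV (case_sum Hs Ks x))" if "x \<in> Inl ` I \<union> Inr ` J" for x
    using that
  proof (rule Inl_Inr_cases)
    fix i assume i: "i \<in> I"
    show "inj_on (case_sum (\<lambda>i. \<phi>2 \<circ> \<psi> i) \<psi>2 (Inl i)) (gV (case_sum Hs Ks (Inl i)))"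
      using decomp_ipsi[OF d1 i] iY HY[OF i] by (auto intro: comp_inj_on inj_on_subset)
  next
    fix j assume j: "j \<in> J"
    show "inj_on (case_sum (\<lambda>i. \<phi>2 \<circ> \<psi> i) \<psi>2 (Inr j)) (gV (case_sum Hs Ks (Inr j)))"
      using decomp_ipsi[OF d2 j] by simp
  qed
  show "map (case_sum (\<lambda>i. \<phi>2 \<circ> \<psi> i) \<psi>2 x) (gext (case_sum Hs Ks x)) = map (\<phi>2 \<circ> \<phi>) (fst (case_sum es gs x))"
    if "x \<in> Inl ` I \<union> Inr ` J" for x
    using that
  proof (rule Inl_Inr_cases)
    fix i assume i: "i \<in> I"
    have "map (\<phi>2 \<circ> \<psi> i) (gext (Hs i)) = map \<phi>2 (map (\<psi> i) (gext (Hs i)))" by simp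
    also have "\<dots> = map (\<phi>2 \<circ> \<phi>) (fst (es i))" unfolding decomp_ext[OF d1 i] by simp
    finally show "map (case_sum (\<lambda>i. \<phi>2 \<circ> \<psi> i) \<psi>2 (Inl i)) (gext (case_sum Hs Ks (Inl i))) = map (\<phi>2 \<circ> \<phi>) (fst (case_sum es gs (Inl i)))"
      by simp
  next
    fix j assume j: "j \<in> J"
    show "map (case_sum (\<lambda>i. \<phi>2 \<circ> \<psi> i) \<psi>2 (Inr j)) (gext (case_sum Hs Ks (Inr j))) = map (\<phi>2 \<circ> \<phi>) (fst (case_sum es gs (Inr j)))"
      using decomp_ext[OF d2 j] fg[OF j] by simp
  qed
  show "case_sum (\<lambda>i. \<phi>2 \<circ> \<psi> i) \<psi>2 x ` intn (case_sum Hs Ks x) \<inter> (\<phi>2 \<circ> \<phi>) ` gV G = {}"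
    if "x \<in> Inl ` I \<union> Inr ` J" for x
    using that
  proof (rule Inl_Inr_cases)
    fix i assume i: "i \<in> I"
    have "\<phi>2 ` (\<psi> i ` intn (Hs i)) \<inter> \<phi>2 ` (\<phi> ` gV G) = \<phi>2 ` (\<psi> i ` intn (Hs i) \<inter> \<phi> ` gV G)"
      using HY[OF i] GY intn_sub[of "Hs i"] by (intro inj_on_image_Int[OF iY, symmetric]) blast+
    then show "case_sum (\<lambda>i. \<phi>2 \<circ> \<psi> i) \<psi>2 (Inl i) ` intn (case_sum Hs Ks (Inl i)) \<inter> (\<phi>2 \<circ> \<phi>) ` gV G = {}"
      using decomp_disj1[OF d1 i] by (simp add: image_comp)
  next
    fix j assume j: "j \<in> J"
    show "case_sum (\<lambda>i. \<phi>2 \<circ> \<psi> i) \<psi>2 (Inr j) ` intn (case_sum Hs Ks (Inr j)) \<inter> (\<phi>2 \<circ> \<phi>) ` gV G = {}"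
      using decomp_disj1[OF d2 j] GY by auto
  qed
  show "case_sum (\<lambda>i. \<phi>2 \<circ> \<psi> i) \<psi>2 x ` intn (case_sum Hs Ks x) \<inter> case_sum (\<lambda>i. \<phi>2 \<circ> \<psi> i) \<psi>2 y ` intn (case_sum Hs Ks y) = {}"
    if xy: "x \<in> Inl ` I \<union> Inr ` J" "y \<in> Inl ` I \<union> Inr ` J" "x \<noteq> y" for x y
  proof -
    have ll: "\<phi>2 ` \<psi> i ` intn (Hs i) \<inter> \<phi>2 ` \<psi> i' ` intn (Hs i') = {}" if "i \<in> I" "i' \<in> I" "i \<noteq> i'" for i i'
    proof -
      have "\<phi>2 ` (\<psi> i ` intn (Hs i)) \<inter> \<phi>2 ` (\<psi> i' ` intn (Hs i')) = \<phi>2 ` (\<psi> i ` intn (Hs i) \<inter> \<psi> i' ` intn (Hs i'))"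
        using HY[OF that(1)] HY[OF that(2)] intn_sub[of "Hs i"] intn_sub[of "Hs i'"]
        by (intro inj_on_image_Int[OF iY, symmetric]) blast+
      then show ?thesis using decomp_disj2[OF d1 that] by simp
    qed
    have lr: "\<phi>2 ` \<psi> i ` intn (Hs i) \<inter> \<psi>2 j ` intn (Ks j) = {}" if "i \<in> I" "j \<in> J" for i j
      using decomp_disj1[OF d2 that(2)] HY[OF that(1)] intn_sub[of "Hs i"] by blast
    from xy(1) consider i where "x = Inl i" "i \<in> I" | j where "x = Inr j" "j \<in> J" by blast
    then show ?thesis
    proof cases
      case 1
      from xy(2) consider i' where "y = Inl i'" "i' \<in> I" | j' where "y = Inr j'" "j' \<in> J" by blast
      then show ?thesis
      proof cases
        case 3: 1
        then have "i \<noteq> i'" using xy(3) 1 by simp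
        then show ?thesis using ll[OF 1(2) 3(2)] 1 3 by (simp add: image_comp)
      next
        case 4: 2
        then show ?thesis using lr[OF 1(2) 4(2)] 1 4 by (simp add: image_comp)
      qed
    next
      case 2
      from xy(2) consider i' where "y = Inl i'" "i' \<in> I" | j' where "y = Inr j'" "j' \<in> J" by blast
      then show ?thesis
      proof cases
        case 3: 1
        then show ?thesis using lr[OF 3(2) 2(2)] 2 3 by (simp add: image_comp Int_commute)
      next
        case 4: 2
        then have "j \<noteq> j'" using xy(3) 2 by simp
        then show ?thesis using decomp_disj2[OF d2 2(2) 4(2)] 2 4 by simp
      qed
    qed
  qed
  have "(\<Union>x\<in>Inl ` I \<union> Inr ` J. case_sum (\<lambda>i. \<phi>2 \<circ> \<psi> i) \<psi>2 x ` gV (case_sum Hs Ks x))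
     = (\<Union>i\<in>I. \<phi>2 ` \<psi> i ` gV (Hs i)) \<union> (\<Union>j\<in>J. \<psi>2 j ` gV (Ks j))"
    by (simp add: image_comp)
  then show "gV X = (\<phi>2 \<circ> \<phi>) ` gV G \<union> (\<Union>x\<in>Inl ` I \<union> Inr ` J. case_sum (\<lambda>i. \<phi>2 \<circ> \<psi> i) \<psi>2 x ` gV (case_sum Hs Ks x))"
    unfolding decomp_V[OF d2] decomp_V[OF d1] image_Un image_UN by (simp add: image_comp Un_assoc)
  show "mset (gE X) = image_mset (emap (\<phi>2 \<circ> \<phi>)) (mset (gE G) - esum (Inl ` I \<union> Inr ` J) (case_sum es gs))
        + (\<Sum>x\<in>Inl ` I \<union> Inr ` J. image_mset (emap (case_sum (\<lambda>i. \<phi>2 \<circ> \<psi> i) \<psi>2 x)) (mset (gE (case_sum Hs Ks x))))"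
  proof -
    define M where "M = mset (gE G)"
    define A where "A = esum I es"
    define B where "B = esum J gs"
    define S1 where "S1 = (\<Sum>i\<in>I. image_mset (emap (\<psi> i)) (mset (gE (Hs i))))"
    have fs: "esum J fs = image_mset (emap \<phi>) B" unfolding B_def by (rule esum_emap[OF fg])
    have BMA: "B \<subseteq># M - A" using gsub unfolding B_def M_def A_def .
    have Y: "mset (gE Y) = image_mset (emap \<phi>) (M - A) + S1"
      unfolding M_def A_def S1_def by (rule decomp_E[OF d1])
    have "M - A - B + B = M - A" by (rule subset_mset.diff_add[OF BMA])
    then have "M - A = (M - A - B) + B" by simp
    then have "image_mset (emap \<phi>) (M - A) = image_mset (emap \<phi>) (M - A - B) + image_mset (emap \<phi>) B"
      by (metis image_mset_union)
    then have Ydiff: "mset (gE Y) - esum J fs = image_mset (emap \<phi>) (M - (A + B)) + S1"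
      unfolding Y fs by (simp add: diff_diff_add)
    have "mset (gE X) = image_mset (emap \<phi>2) (mset (gE Y) - esum J fs)
        + (\<Sum>j\<in>J. image_mset (emap (\<psi>2 j)) (mset (gE (Ks j))))" by (rule decomp_E[OF d2])
    also have "\<dots> = image_mset (emap (\<phi>2 \<circ> \<phi>)) (M - (A + B))
        + (\<Sum>i\<in>I. image_mset (emap (\<phi>2 \<circ> \<psi> i)) (mset (gE (Hs i))))
        + (\<Sum>j\<in>J. image_mset (emap (\<psi>2 j)) (mset (gE (Ks j))))"
      unfolding Ydiff S1_def by (simp add: image_mset_sum image_emap_comp)
    also have "\<dots> = image_mset (emap (\<phi>2 \<circ> \<phi>)) (mset (gE G) - esum (Inl ` I \<union> Inr ` J) (case_sum es gs))
        + (\<Sum>x\<in>Inl ` I \<union> Inr ` J. image_mset (emap (case_sum (\<lambda>i. \<phi>2 \<circ> \<psi> i) \<psi>2 x)) (mset (gE (case_sum Hs Ks x))))"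
      unfolding es sum_Inl_Inr[OF fI fJ] M_def A_def B_def by (simp add: add.assoc)
    finally show ?thesis .
  qed
  show "gext X = map (\<phi>2 \<circ> \<phi>) (gext G)" using decomp_x[OF d1] decomp_x[OF d2] by simp
qed


lemma disj_lemma:
  assumes "A \<inter> C = {}" "\<And>j. j \<in> J \<Longrightarrow> B j \<inter> C = {}" "X \<subseteq> A \<union> (\<Union>j\<in>J. B j)"
  shows "X \<inter> C = {}"
proof (rule equals0I)
  fix x assume "x \<in> X \<inter> C"
  then have x: "x \<in> X" "x \<in> C" by auto
  from subsetD[OF assms(3) x(1)] show False
  proof
    assume "x \<in> A" then show False using assms(1) x(2) by blast
  next
    assume "x \<in> (\<Union>j\<in>J. B j)"
    then obtain j where "j \<in> J" "x \<in> B j" by blast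
    then show False using assms(2) x(2) by blast
  qed
qed

lemma decomp_comp_in:
  assumes d1: "decomp Y G I es Hs \<phi> \<psi>" and d2: "decomp X Y J fs Ks \<phi>2 \<psi>2" and k: "k \<in> I"
    and fg: "\<And>j. j \<in> J \<Longrightarrow> fs j = emap (\<psi> k) (gs j)"
    and d3: "decomp Z (Hs k) J gs Ks \<phi>3 \<psi>3"
  shows "\<exists>\<psi>'. decomp X G I es (Hs(k := Z)) (\<phi>2 \<circ> \<phi>) \<psi>'"
proof -
  define \<alpha> where "\<alpha> = \<phi>2 \<circ> \<psi> k"
  define \<chi> where "\<chi> = glue (Hs k) J Ks \<phi>3 \<psi>3 \<alpha> \<psi>2"
  define \<psi>' where "\<psi>' = (\<lambda>i. if i = k then \<chi> else \<phi>2 \<circ> \<psi> i)"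
  have fI: "finite I" by (rule decomp_fin[OF d1])
  have iY: "inj_on \<phi>2 (gV Y)" by (rule decomp_iphi[OF d2])
  have GY: "\<phi> ` gV G \<subseteq> gV Y" by (rule decomp_VG[OF d1])
  have HY: "\<psi> i ` gV (Hs i) \<subseteq> gV Y" if "i \<in> I" for i by (rule decomp_VH[OF d1 that])
  have HYi: "\<psi> i ` intn (Hs i) \<subseteq> gV Y" if "i \<in> I" for i using HY[OF that] intn_sub[of "Hs i"] by blast
  have compat: "map (\<psi>2 j) (gext (Ks j)) = map \<alpha> (fst (gs j))" if j: "j \<in> J" for j
    unfolding decomp_ext[OF d2 j] fg[OF j] \<alpha>_def by simp
  have ia: "inj_on \<alpha> (gV (Hs k))" unfolding \<alpha>_def
    using decomp_ipsi[OF d1 k] iY HY[OF k] by (auto intro: comp_inj_on inj_on_subset)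
  have cd1: "\<psi>2 j ` intn (Ks j) \<inter> \<alpha> ` gV (Hs k) = {}" if "j \<in> J" for j
  proof -
    have "\<alpha> ` gV (Hs k) \<subseteq> \<phi>2 ` gV Y" unfolding \<alpha>_def using HY[OF k] by auto
    then show ?thesis using decomp_disj1[OF d2 that] by blast
  qed
  have chi_inj: "inj_on \<chi> (gV Z)" unfolding \<chi>_def
    by (rule glue_inj[OF d3 compat ia decomp_ipsi[OF d2] cd1 decomp_disj2[OF d2]])
  have chi_img: "\<chi> ` gV Z = \<alpha> ` gV (Hs k) \<union> (\<Union>j\<in>J. \<psi>2 j ` gV (Ks j))"
    unfolding \<chi>_def by (rule glue_image[OF d3 compat])
  have chi_int: "\<chi> ` intn Z \<subseteq> \<alpha> ` intn (Hs k) \<union> (\<Union>j\<in>J. \<psi>2 j ` intn (Ks j))"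
    unfolding \<chi>_def by (rule glue_image_intn[OF d3])
  have chi_E: "image_mset (emap \<chi>) (mset (gE Z)) = image_mset (emap \<alpha>) (mset (gE (Hs k)) - esum J gs)
      + (\<Sum>j\<in>J. image_mset (emap (\<psi>2 j)) (mset (gE (Ks j))))"
    unfolding \<chi>_def by (rule glue_edges[OF d3 compat])
  have chi_phi: "\<chi> (\<phi>3 w) = \<alpha> w" if "w \<in> gV (Hs k)" for w
    unfolding \<chi>_def by (rule glue_phi[OF d3 that])
  have aint: "\<alpha> ` intn (Hs k) \<inter> \<phi>2 ` \<phi> ` gV G = {}"
  proof -
    have "\<phi>2 ` (\<psi> k ` intn (Hs k)) \<inter> \<phi>2 ` (\<phi> ` gV G) = \<phi>2 ` (\<psi> k ` intn (Hs k) \<inter> \<phi> ` gV G)"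
      using HYi[OF k] GY by (intro inj_on_image_Int[OF iY, symmetric]) blast+
    then show ?thesis using decomp_disj1[OF d1 k] unfolding \<alpha>_def by (simp add: image_comp)
  qed
  have ll: "\<phi>2 ` \<psi> i ` intn (Hs i) \<inter> \<phi>2 ` \<psi> i' ` intn (Hs i') = {}" if "i \<in> I" "i' \<in> I" "i \<noteq> i'" for i i'
  proof -
    have "\<phi>2 ` (\<psi> i ` intn (Hs i)) \<inter> \<phi>2 ` (\<psi> i' ` intn (Hs i')) = \<phi>2 ` (\<psi> i ` intn (Hs i) \<inter> \<psi> i' ` intn (Hs i'))"
      using HYi[OF that(1)] HYi[OF that(2)] by (intro inj_on_image_Int[OF iY, symmetric]) blast+
    then show ?thesis using decomp_disj2[OF d1 that] by simp
  qed
  have chi_other: "\<chi> ` intn Z \<inter> \<phi>2 ` \<psi> i ` intn (Hs i) = {}" if "i \<in> I" "i \<noteq> k" for i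
  proof -
    have "\<alpha> ` intn (Hs k) \<inter> \<phi>2 ` \<psi> i ` intn (Hs i) = {}"
      using ll[OF k that(1)] that(2) unfolding \<alpha>_def by (simp add: image_comp)
    moreover have "\<psi>2 j ` intn (Ks j) \<inter> \<phi>2 ` \<psi> i ` intn (Hs i) = {}" if "j \<in> J" for j
      using decomp_disj1[OF d2 that] HYi[OF \<open>i \<in> I\<close>] by blast
    ultimately show ?thesis using chi_int by (rule disj_lemma)
  qed
  have "decomp X G I es (Hs(k := Z)) (\<phi>2 \<circ> \<phi>) \<psi>'"
  proof (rule decompI)
    show "finite I" by (rule fI)
    show "esum I es \<subseteq># mset (gE G)" by (rule decomp_sub[OF d1])
    show "hg_struct G" by (rule decomp_sG[OF d1])
    show "hg_struct ((Hs(k := Z)) i)" if "i \<in> I" for i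
      using decomp_struct[OF d3] decomp_sH[OF d1 that] by simp
    show "inj_on (\<phi>2 \<circ> \<phi>) (gV G)"
      using decomp_iphi[OF d1] iY GY by (auto intro: comp_inj_on inj_on_subset)
    show "inj_on (\<psi>' i) (gV ((Hs(k := Z)) i))" if i: "i \<in> I" for i
    proof (cases "i = k")
      case True then show ?thesis using chi_inj by (simp add: \<psi>'_def)
    next
      case False then show ?thesis unfolding \<psi>'_def
        using decomp_ipsi[OF d1 i] iY HY[OF i] by (auto intro: comp_inj_on inj_on_subset)
    qed
    show "map (\<psi>' i) (gext ((Hs(k := Z)) i)) = map (\<phi>2 \<circ> \<phi>) (fst (es i))" if i: "i \<in> I" for i
    proof (cases "i = k")
      case True
      have ss: "set (gext (Hs k)) \<subseteq> gV (Hs k)" using decomp_sH[OF d1 k] unfolding hg_struct_def by blast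
      have "map \<chi> (gext Z) = map \<alpha> (gext (Hs k))"
        unfolding decomp_x[OF d3] using chi_phi ss by auto
      also have "\<dots> = map \<phi>2 (map (\<psi> k) (gext (Hs k)))" unfolding \<alpha>_def by simp
      also have "\<dots> = map (\<phi>2 \<circ> \<phi>) (fst (es k))" unfolding decomp_ext[OF d1 k] by simp
      finally show ?thesis using True by (simp add: \<psi>'_def)
    next
      case False
      have "map (\<phi>2 \<circ> \<psi> i) (gext (Hs i)) = map \<phi>2 (map (\<psi> i) (gext (Hs i)))" by simp
      also have "\<dots> = map (\<phi>2 \<circ> \<phi>) (fst (es i))" unfolding decomp_ext[OF d1 i] by simp
      finally show ?thesis using False by (simp add: \<psi>'_def)
    qed
    show "\<psi>' i ` intn ((Hs(k := Z)) i) \<inter> (\<phi>2 \<circ> \<phi>) ` gV G = {}" if i: "i \<in> I" for i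
    proof (cases "i = k")
      case True
      have jj: "\<psi>2 j ` intn (Ks j) \<inter> \<phi>2 ` \<phi> ` gV G = {}" if "j \<in> J" for j
        using decomp_disj1[OF d2 that] GY by blast
      have "\<chi> ` intn Z \<inter> \<phi>2 ` \<phi> ` gV G = {}" by (rule disj_lemma[OF aint jj chi_int])
      then show ?thesis using True by (simp add: \<psi>'_def image_comp)
    next
      case False
      have "\<phi>2 ` (\<psi> i ` intn (Hs i)) \<inter> \<phi>2 ` (\<phi> ` gV G) = \<phi>2 ` (\<psi> i ` intn (Hs i) \<inter> \<phi> ` gV G)"
        using HYi[OF i] GY by (intro inj_on_image_Int[OF iY, symmetric]) blast+
      then show ?thesis using decomp_disj1[OF d1 i] False by (simp add: \<psi>'_def image_comp)
    qed
    show "\<psi>' i ` intn ((Hs(k := Z)) i) \<inter> \<psi>' j ` intn ((Hs(k := Z)) j) = {}"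
      if ij: "i \<in> I" "j \<in> I" "i \<noteq> j" for i j
    proof (cases "i = k")
      case True
      then have "j \<noteq> k" using ij by simp
      then show ?thesis using chi_other[OF ij(2)] True by (simp add: \<psi>'_def image_comp)
    next
      case False
      show ?thesis
      proof (cases "j = k")
        case True
        then show ?thesis using chi_other[OF ij(1) False] False by (simp add: \<psi>'_def image_comp Int_commute)
      next
        case False2: False
        then show ?thesis using ll[OF ij] False by (simp add: \<psi>'_def image_comp)
      qed
    qed
    show "gV X = (\<phi>2 \<circ> \<phi>) ` gV G \<union> (\<Union>i\<in>I. \<psi>' i ` gV ((Hs(k := Z)) i))"
    proof -
      have Ik: "I = insert k (I - {k})" using k by blast
      have UNk: "(\<Union>i\<in>I. F i) = F k \<union> (\<Union>i\<in>I - {k}. F i)" for F :: "'b \<Rightarrow> nat set"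
        using k by blast
      have "(\<Union>i\<in>I - {k}. \<psi>' i ` gV ((Hs(k := Z)) i)) = (\<Union>i\<in>I - {k}. \<phi>2 ` \<psi> i ` gV (Hs i))"
        by (rule SUP_cong[OF refl]) (auto simp: \<psi>'_def)
      then have "(\<Union>i\<in>I. \<psi>' i ` gV ((Hs(k := Z)) i)) = \<chi> ` gV Z \<union> (\<Union>i\<in>I - {k}. \<phi>2 ` \<psi> i ` gV (Hs i))"
        using UNk[of "\<lambda>i. \<psi>' i ` gV ((Hs(k := Z)) i)"] by (simp add: \<psi>'_def)
      also have "\<dots> = (\<Union>j\<in>J. \<psi>2 j ` gV (Ks j)) \<union> (\<Union>i\<in>I. \<phi>2 ` \<psi> i ` gV (Hs i))"
        unfolding chi_img \<alpha>_def using UNk[of "\<lambda>i. \<phi>2 ` \<psi> i ` gV (Hs i)"] by (auto simp: image_comp)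
      finally have u: "(\<Union>i\<in>I. \<psi>' i ` gV ((Hs(k := Z)) i)) = (\<Union>j\<in>J. \<psi>2 j ` gV (Ks j)) \<union> (\<Union>i\<in>I. \<phi>2 ` \<psi> i ` gV (Hs i))" .
      show ?thesis unfolding u decomp_V[OF d2] decomp_V[OF d1] image_Un image_UN
        by (simp add: image_comp Un_ac)
    qed
    show "mset (gE X) = image_mset (emap (\<phi>2 \<circ> \<phi>)) (mset (gE G) - esum I es)
        + (\<Sum>i\<in>I. image_mset (emap (\<psi>' i)) (mset (gE ((Hs(k := Z)) i))))"
    proof -
      define R where "R = mset (gE G) - esum I es"
      define B where "B = esum J gs"
      define Ek where "Ek = mset (gE (Hs k))"
      define S where "S = (\<Sum>i\<in>I - {k}. image_mset (emap (\<psi> i)) (mset (gE (Hs i))))"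
      have BE: "B \<subseteq># Ek" unfolding B_def Ek_def by (rule decomp_sub[OF d3])
      have fs: "esum J fs = image_mset (emap (\<psi> k)) B" unfolding B_def by (rule esum_emap[OF fg])
      have Y: "mset (gE Y) = image_mset (emap \<phi>) R + image_mset (emap (\<psi> k)) Ek + S"
        unfolding decomp_E[OF d1] R_def Ek_def S_def sum.remove[OF fI k] by (simp add: add.assoc)
      have "Ek - B + B = Ek" by (rule subset_mset.diff_add[OF BE])
      then have "image_mset (emap (\<psi> k)) Ek = image_mset (emap (\<psi> k)) (Ek - B) + image_mset (emap (\<psi> k)) B"
        by (metis image_mset_union)
      then have Yd: "mset (gE Y) - esum J fs = image_mset (emap \<phi>) R + image_mset (emap (\<psi> k)) (Ek - B) + S"
        unfolding Y fs by (simp add: add.assoc add.commute add.left_commute)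
      have "mset (gE X) = image_mset (emap \<phi>2) (mset (gE Y) - esum J fs)
          + (\<Sum>j\<in>J. image_mset (emap (\<psi>2 j)) (mset (gE (Ks j))))" by (rule decomp_E[OF d2])
      also have "\<dots> = image_mset (emap (\<phi>2 \<circ> \<phi>)) R + image_mset (emap \<alpha>) (Ek - B)
          + (\<Sum>i\<in>I - {k}. image_mset (emap (\<phi>2 \<circ> \<psi> i)) (mset (gE (Hs i))))
          + (\<Sum>j\<in>J. image_mset (emap (\<psi>2 j)) (mset (gE (Ks j))))"
        unfolding Yd S_def \<alpha>_def by (simp add: image_mset_sum image_emap_comp)
      also have "\<dots> = image_mset (emap (\<phi>2 \<circ> \<phi>)) R + image_mset (emap \<chi>) (mset (gE Z))
          + (\<Sum>i\<in>I - {k}. image_mset (emap (\<phi>2 \<circ> \<psi> i)) (mset (gE (Hs i))))"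
        unfolding chi_E B_def[symmetric] Ek_def[symmetric] by (simp add: add_ac)
      also have "(\<Sum>i\<in>I - {k}. image_mset (emap (\<phi>2 \<circ> \<psi> i)) (mset (gE (Hs i))))
          = (\<Sum>i\<in>I - {k}. image_mset (emap (\<psi>' i)) (mset (gE ((Hs(k := Z)) i))))"
        by (rule sum.cong) (auto simp: \<psi>'_def)
      also have "image_mset (emap \<chi>) (mset (gE Z)) = image_mset (emap (\<psi>' k)) (mset (gE ((Hs(k := Z)) k)))"
        by (simp add: \<psi>'_def)
      finally show ?thesis unfolding R_def sum.remove[OF fI k] by (simp add: add.assoc comp_def)
    qed
    show "gext X = map (\<phi>2 \<circ> \<phi>) (gext G)" using decomp_x[OF d1] decomp_x[OF d2] by simp
  qed
  then show ?thesis by blast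
qed

lemma decomp_cong:
  assumes d: "decomp X G I es Hs \<phi> \<psi>"
    and c1: "\<And>i. i \<in> I \<Longrightarrow> es' i = es i" and c2: "\<And>i. i \<in> I \<Longrightarrow> Hs' i = Hs i"
    and c3: "\<And>i. i \<in> I \<Longrightarrow> \<psi>' i = \<psi> i"
  shows "decomp X G I es' Hs' \<phi> \<psi>'"
proof (rule decompI)
  have es: "esum I es' = esum I es" unfolding esum_def by (rule sum.cong) (auto simp: c1)
  show "finite I" by (rule decomp_fin[OF d])
  show "esum I es' \<subseteq># mset (gE G)" unfolding es by (rule decomp_sub[OF d])
  show "hg_struct G" by (rule decomp_sG[OF d])
  show "hg_struct (Hs' i)" if "i \<in> I" for i using decomp_sH[OF d that] c2[OF that] by simp
  show "inj_on \<phi> (gV G)" by (rule decomp_iphi[OF d])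
  show "inj_on (\<psi>' i) (gV (Hs' i))" if "i \<in> I" for i using decomp_ipsi[OF d that] c2[OF that] c3[OF that] by simp
  show "map (\<psi>' i) (gext (Hs' i)) = map \<phi> (fst (es' i))" if "i \<in> I" for i
    using decomp_ext[OF d that] c1[OF that] c2[OF that] c3[OF that] by simp
  show "\<psi>' i ` intn (Hs' i) \<inter> \<phi> ` gV G = {}" if "i \<in> I" for i
    using decomp_disj1[OF d that] c2[OF that] c3[OF that] by simp
  show "\<psi>' i ` intn (Hs' i) \<inter> \<psi>' j ` intn (Hs' j) = {}" if "i \<in> I" "j \<in> I" "i \<noteq> j" for i j
    using decomp_disj2[OF d that] c2[OF that(1)] c3[OF that(1)] c2[OF that(2)] c3[OF that(2)] by simp
  have "(\<Union>i\<in>I. \<psi>' i ` gV (Hs' i)) = (\<Union>i\<in>I. \<psi> i ` gV (Hs i))"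
    by (rule SUP_cong[OF refl]) (simp add: c2 c3)
  then show "gV X = \<phi> ` gV G \<union> (\<Union>i\<in>I. \<psi>' i ` gV (Hs' i))" using decomp_V[OF d] by simp
  have "(\<Sum>i\<in>I. image_mset (emap (\<psi>' i)) (mset (gE (Hs' i)))) = (\<Sum>i\<in>I. image_mset (emap (\<psi> i)) (mset (gE (Hs i))))"
    by (rule sum.cong[OF refl]) (simp add: c2 c3)
  then show "mset (gE X) = image_mset (emap \<phi>) (mset (gE G) - esum I es')
        + (\<Sum>i\<in>I. image_mset (emap (\<psi>' i)) (mset (gE (Hs' i))))" using decomp_E[OF d] es by simp
  show "gext X = map \<phi> (gext G)" by (rule decomp_x[OF d])
qed

lemma repl1_decomp:
  assumes "hg_struct G" "e < length (gE G)" "hg_struct H" "length (fst (gE G ! e)) = length (gext H)"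
  shows "decomp (repl1 G e H) G {e} (\<lambda>i. gE G ! i) (\<lambda>_. H) g_node (\<lambda>i. h_node i H (fst (gE G ! i)))"
proof -
  have I: "{i. i < length (gE G) \<and> (if i = e then Some H else None) \<noteq> None} = {e}" using assms(2) by auto
  have "decomp (repl1 G e H) G {i. i < length (gE G) \<and> (if i = e then Some H else None) \<noteq> None}
    (\<lambda>i. gE G ! i) (\<lambda>i. the (if i = e then Some H else None)) g_node
    (\<lambda>i. h_node i (the (if i = e then Some H else None)) (fst (gE G ! i)))"
    unfolding repl1_def by (rule repl_decomp) (use assms in \<open>auto split: if_splits\<close>)
  then have "decomp (repl1 G e H) G {e} (\<lambda>i. gE G ! i) (\<lambda>_. H) g_node
    (\<lambda>i. h_node i (the (if i = e then Some H else None)) (fst (gE G ! i)))"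
    unfolding I by (rule decomp_cong) auto
  then show ?thesis by (rule decomp_cong) auto
qed

lemma esum_single[simp]: "esum {e} f = {#f e#}"
  by (simp add: esum_def)

lemma mset_minus_nth:
  assumes "j < length xs"
  shows "mset xs - {#xs ! j#} = esum ({..<length xs} - {j}) (\<lambda>i. xs ! i)"
proof -
  have "mset xs = esum {j} (\<lambda>i. xs ! i) + esum ({..<length xs} - {j}) (\<lambda>i. xs ! i)"
    unfolding mset_nth_sum[of xs] by (rule esum_split) (use assms in auto)
  then show ?thesis by simp
qed

lemma nth_in_diff:
  assumes "i < length xs" "j < length xs" "i \<noteq> j"
  shows "xs ! i \<in># mset xs - {#xs ! j#}"
  unfolding mset_minus_nth[OF assms(2)] by (rule esum_in) (use assms in auto)

lemma in_diff_idx: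
  assumes "x \<in># mset xs - {#xs ! j#}" "j < length xs"
  shows "\<exists>i<length xs. i \<noteq> j \<and> xs ! i = x"
proof -
  have "x \<in># (\<Sum>i\<in>{..<length xs} - {j}. {#xs ! i#})"
    using assms unfolding mset_minus_nth[OF assms(2)] esum_def by simp
  from in_sum_mset[OF _ this] show ?thesis by auto
qed

lemma mem_idx: "x \<in># mset xs \<Longrightarrow> \<exists>i<length xs. xs ! i = x"
  by (simp add: in_set_conv_nth)

lemma decomp_edge_rest:
  assumes d: "decomp X G I es Hs \<phi> \<psi>" and y: "y \<in># mset (gE G) - esum I es"
  shows "\<exists>i<length (gE X). gE X ! i = emap \<phi> y"
proof -
  have "emap \<phi> y \<in># mset (gE X)" unfolding decomp_E[OF d] using y by simp
  then show ?thesis by (rule mem_idx)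
qed

lemma decomp_edge_in:
  assumes d: "decomp X G I es Hs \<phi> \<psi>" and k: "k \<in> I" and y: "y \<in> set (gE (Hs k))"
  shows "\<exists>i<length (gE X). gE X ! i = emap (\<psi> k) y"
proof -
  have "emap (\<psi> k) y \<in># (\<Sum>i\<in>I. image_mset (emap (\<psi> i)) (mset (gE (Hs i))))"
    by (rule in_sum_msetI[OF decomp_fin[OF d] k]) (use y in simp)
  then have "emap (\<psi> k) y \<in># mset (gE X)" unfolding decomp_E[OF d] by simp
  then show ?thesis by (rule mem_idx)
qed

lemma nest_iso:
  assumes d1: "decomp Y G I es Hs \<phi> \<psi>" and k: "k \<in> I"
    and e0: "gE Y ! e0 = emap (\<psi> k) (gE (Hs k) ! e1)"
    and d2: "decomp X Y {e0} (\<lambda>i. gE Y ! i) (\<lambda>_. M) \<phi>2 \<psi>2"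
    and d3: "decomp W (Hs k) {e1} (\<lambda>i. gE (Hs k) ! i) (\<lambda>_. M) \<phi>3 \<psi>3"
    and d': "decomp X' G I es Hs' \<phi>' \<psi>'" and hs': "\<And>i. i \<in> I \<Longrightarrow> i \<noteq> k \<Longrightarrow> Hs' i = Hs i"
    and iso: "hg_iso W (Hs' k)"
  shows "hg_iso X X'"
proof -
  have t: "bij_betw (\<lambda>_. e1) {e0} {e1}" by (simp add: bij_betw_def)
  have d3': "decomp W (Hs k) {e0} ((\<lambda>i. gE (Hs k) ! i) \<circ> (\<lambda>_. e1)) ((\<lambda>_. M) \<circ> (\<lambda>_. e1)) \<phi>3 (\<psi>3 \<circ> (\<lambda>_. e1))"
    by (rule decomp_reindex[OF d3 t])
  have d3'': "decomp W (Hs k) {e0} (\<lambda>_. gE (Hs k) ! e1) (\<lambda>_. M) \<phi>3 (\<psi>3 \<circ> (\<lambda>_. e1))"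
    using d3' by (simp add: comp_def)
  obtain \<psi>'' where dd: "decomp X G I es (Hs(k := W)) (\<phi>2 \<circ> \<phi>) \<psi>''"
    using decomp_comp_in[OF d1 d2 k _ d3''] e0 by auto
  obtain f where f: "hiso W (Hs' k) f" using iso unfolding hg_iso_iff by blast
  show ?thesis
  proof (rule decomp_unique[OF dd d' hiso_refl, where f = "\<lambda>i. if i = k then f else id"])
    show "es i = emap id (es i)" for i by simp
    show "hiso ((Hs(k := W)) i) (Hs' i) (if i = k then f else id)" if "i \<in> I" for i
      using f hs'[OF that] hiso_refl by auto
  qed
qed

lemma swap_iso:
  assumes d1: "decomp Y G {e} (\<lambda>i. gE G ! i) (\<lambda>_. F) \<phi> \<psi>"
    and d1': "decomp Y' G {e0} (\<lambda>i. gE G ! i) (\<lambda>_. M) \<phi>' \<psi>'"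
    and ee: "e < length (gE G)" "e0 < length (gE G)" "e \<noteq> e0"
    and y: "gE Y ! e0' = emap \<phi> (gE G ! e0)" and y': "gE Y' ! e' = emap \<phi>' (gE G ! e)"
    and d2: "decomp X Y {e0'} (\<lambda>i. gE Y ! i) (\<lambda>_. M) \<phi>2 \<psi>2"
    and d2': "decomp X' Y' {e'} (\<lambda>i. gE Y' ! i) (\<lambda>_. F) \<phi>2' \<psi>2'"
  shows "hg_iso X X'"
proof -
  have s1: "esum {e0'} (\<lambda>_. gE G ! e0) \<subseteq># mset (gE G) - esum {e} (\<lambda>i. gE G ! i)"
    using nth_in_diff[OF ee(2,1)] ee(3) by simp
  have s2: "esum {e'} (\<lambda>_. gE G ! e) \<subseteq># mset (gE G) - esum {e0} (\<lambda>i. gE G ! i)"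
    using nth_in_diff[OF ee(1,2)] ee(3) by simp
  have c1: "decomp X G (Inl ` {e} \<union> Inr ` {e0'}) (case_sum (\<lambda>i. gE G ! i) (\<lambda>_. gE G ! e0))
      (case_sum (\<lambda>_. F) (\<lambda>_. M)) (\<phi>2 \<circ> \<phi>) (case_sum (\<lambda>i. \<phi>2 \<circ> \<psi> i) \<psi>2)"
    by (rule decomp_comp_out[OF d1 d2 _ s1]) (use y in simp)
  have c2: "decomp X' G (Inl ` {e0} \<union> Inr ` {e'}) (case_sum (\<lambda>i. gE G ! i) (\<lambda>_. gE G ! e))
      (case_sum (\<lambda>_. M) (\<lambda>_. F)) (\<phi>2' \<circ> \<phi>') (case_sum (\<lambda>i. \<phi>2' \<circ> \<psi>' i) \<psi>2')"
    by (rule decomp_comp_out[OF d1' d2' _ s2]) (use y' in simp)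
  define \<sigma> :: "nat + nat \<Rightarrow> nat + nat" where "\<sigma> = (\<lambda>x. case x of Inl _ \<Rightarrow> Inr e' | Inr _ \<Rightarrow> Inl e0)"
  have b: "bij_betw \<sigma> (Inl ` {e} \<union> Inr ` {e0'}) (Inl ` {e0} \<union> Inr ` {e'})"
    unfolding bij_betw_def inj_on_def \<sigma>_def by auto
  have c2': "decomp X' G (Inl ` {e} \<union> Inr ` {e0'}) (case_sum (\<lambda>i. gE G ! i) (\<lambda>_. gE G ! e) \<circ> \<sigma>)
      (case_sum (\<lambda>_. M) (\<lambda>_. F) \<circ> \<sigma>) (\<phi>2' \<circ> \<phi>') (case_sum (\<lambda>i. \<phi>2' \<circ> \<psi>' i) \<psi>2' \<circ> \<sigma>)"
    by (rule decomp_reindex[OF c2 b])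
  show ?thesis
  proof (rule decomp_unique[OF c1 c2' hiso_refl, where f = "\<lambda>_. id"])
    show "(case_sum (\<lambda>i. gE G ! i) (\<lambda>_. gE G ! e) \<circ> \<sigma>) i = emap id (case_sum (\<lambda>i. gE G ! i) (\<lambda>_. gE G ! e0) i)"
      if "i \<in> Inl ` {e} \<union> Inr ` {e0'}" for i using that by (auto simp: \<sigma>_def)
    show "hiso (case_sum (\<lambda>_. F) (\<lambda>_. M) i) ((case_sum (\<lambda>_. M) (\<lambda>_. F) \<circ> \<sigma>) i) id"
      if "i \<in> Inl ` {e} \<union> Inr ` {e0'}" for i using that by (auto simp: \<sigma>_def hiso_refl)
  qed
qed


lemma map_hgraph_sel[simp]:
  "gV (map_hgraph f G) = gV G" "gE (map_hgraph f G) = map (\<lambda>(a, l). (a, f l)) (gE G)"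
  "gext (map_hgraph f G) = gext G"
  by (cases G; simp add: map_prod_def)+

lemma wf_Div_D:
  assumes "wf_tp (Div N D)"
  shows "wf_tp N" "hg_struct D" "length (filter (\<lambda>(a, l). l = None) (gE D)) = 1"
    "\<And>a t. (a, Some t) \<in> set (gE D) \<Longrightarrow> wf_tp t \<and> length a = ttype t" "ttype N = length (gext D)"
  using assms by (cases rule: wf_tp.cases; auto)+

lemma wf_Times_D:
  assumes "wf_tp (Times M)"
  shows "hg_struct M" "\<And>a t. (a, t) \<in> set (gE M) \<Longrightarrow> wf_tp t \<and> length a = ttype t"
  using assms by (cases rule: wf_tp.cases; auto)+

lemma wf_Times_wfg: "wf_tp (Times M) \<Longrightarrow> wfg M"
  unfolding wfg_def using wf_Times_D by blast

lemma ttype_Times[simp]: "ttype (Times M) = length (gext M)"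
  by (simp add: ttype_def)

lemma ttype_Prim[simp]: "ttype (Prim p n) = n"
  by (simp add: ttype_def)

lemma none_unique:
  assumes w: "wf_tp (Div N D)" and ij: "i < length (gE D)" "j < length (gE D)"
    and n: "snd (gE D ! i) = None" "snd (gE D ! j) = None"
  shows "i = j"
proof -
  have "card {k. k < length (gE D) \<and> (\<lambda>(a, l). l = None) (gE D ! k)} = 1"
    using wf_Div_D(3)[OF w] by (simp add: length_filter_conv_card)
  then obtain k where k: "{k. k < length (gE D) \<and> (\<lambda>(a, l). l = None) (gE D ! k)} = {k}"
    by (rule card_1_singletonE)
  have "i \<in> {k}" "j \<in> {k}" unfolding k[symmetric] using ij n by (auto simp: case_prod_beta)
  then show ?thesis by simp
qed

lemma ttype_Div:
  assumes w: "wf_tp (Div N D)" and d0: "d0 < length (gE D)" "snd (gE D ! d0) = None"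
  shows "ttype (Div N D) = length (fst (gE D ! d0))"
proof -
  have "find (\<lambda>(a, l). l = None) (gE D) = Some (gE D ! d0)"
    unfolding find_Some_iff
  proof (intro exI conjI allI impI)
    show "d0 < length (gE D)" by (rule d0(1))
    show "(\<lambda>(a, l). l = None) (gE D ! d0)" using d0(2) by (simp add: case_prod_beta)
    show "gE D ! d0 = gE D ! d0" ..
    fix j assume j: "j < d0"
    show "\<not> (\<lambda>(a, l). l = None) (gE D ! j)"
    proof
      assume "(\<lambda>(a, l). l = None) (gE D ! j)"
      then have "snd (gE D ! j) = None" by (simp add: case_prod_beta)
      then have "j = d0" using none_unique[OF w _ d0(1) _ d0(2)] j d0(1) by simp
      then show False using j by simp
    qed
  qed
  then show ?thesis unfolding ttype_def by (simp add: case_prod_beta split: prod.splits)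
qed

lemma others_some:
  assumes w: "wf_tp (Div N D)" and d0: "d0 < length (gE D)" "snd (gE D ! d0) = None"
    and j: "j < length (gE D)" "j \<noteq> d0"
  shows "\<exists>t. snd (gE D ! j) = Some t \<and> wf_tp t \<and> length (fst (gE D ! j)) = ttype t"
proof -
  obtain t where t: "snd (gE D ! j) = Some t"
    using none_unique[OF w j(1) d0(1) _ d0(2)] j(2) by (cases "snd (gE D ! j)") auto
  have "(fst (gE D ! j), Some t) \<in> set (gE D)" using j(1) t by (metis nth_mem prod.collapse)
  then show ?thesis using wf_Div_D(4)[OF w] t by blast
qed

lemma concat_map_single: "concat (map (\<lambda>i. [f i]) xs) = map f xs"
  by (induct xs) auto

lemma gE_repl1:
  assumes e: "e < length (gE G)"
  shows "gE (repl1 G e H) = map (emap g_node) (take e (gE G))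
      @ map (emap (h_node e H (fst (gE G ! e)))) (gE H) @ map (emap g_node) (drop (Suc e) (gE G))"
proof -
  define xs where "xs = gE G"
  define n where "n = length xs"
  define F where "F = (\<lambda>i. if i = e then map (emap (h_node e H (fst (xs ! e)))) (gE H) else [emap g_node (xs ! i)])"
  have ee: "(\<lambda>(b, l'). (map h b, l')) = emap h" for h :: "nat \<Rightarrow> nat"
    by (auto simp: emap_def fun_eq_iff)
  have "gE (repl1 G e H) = concat (map (\<lambda>i. F i) [0..<n])"
    unfolding repl1_def repl_def xs_def[symmetric] n_def enumerate0
    apply (simp add: comp_def)
    apply (rule arg_cong[where f = concat])
    apply (rule map_cong[OF refl])
    apply (auto simp: F_def emap_def case_prod_beta)
    done
  also have "[0..<n] = [0..<e] @ e # [Suc e..<n]"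
  proof -
    have "[0..<n] = [0..<e] @ [e..<n]" using upt_add_eq_append[of 0 e "n - e"] e by (simp add: n_def xs_def)
    also have "[e..<n] = e # [Suc e..<n]" by (rule upt_conv_Cons) (use e in \<open>simp add: n_def xs_def\<close>)
    finally show ?thesis .
  qed
  also have "concat (map F ([0..<e] @ e # [Suc e..<n]))
      = concat (map F [0..<e]) @ F e @ concat (map F [Suc e..<n])" by simp
  also have "concat (map F [0..<e]) = map (emap g_node) (take e xs)"
  proof -
    have "concat (map F [0..<e]) = concat (map (\<lambda>i. [emap g_node (xs ! i)]) [0..<e])"
      by (rule arg_cong[where f = concat], rule map_cong) (auto simp: F_def)
    moreover have "map (\<lambda>i. emap g_node (xs ! i)) [0..<e] = map (emap g_node) (take e xs)"
      by (rule nth_equalityI) (use e in \<open>auto simp: xs_def\<close>)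
    ultimately show ?thesis by (simp only: concat_map_single)
  qed
  also have "concat (map F [Suc e..<n]) = map (emap g_node) (drop (Suc e) xs)"
  proof -
    have "concat (map F [Suc e..<n]) = concat (map (\<lambda>i. [emap g_node (xs ! i)]) [Suc e..<n])"
      by (rule arg_cong[where f = concat], rule map_cong) (auto simp: F_def)
    moreover have "map (\<lambda>i. emap g_node (xs ! i)) [Suc e..<n] = map (emap g_node) (drop (Suc e) xs)"
      by (rule nth_equalityI) (use e in \<open>auto simp: xs_def n_def add.commute\<close>)
    ultimately show ?thesis by (simp only: concat_map_single)
  qed
  finally show ?thesis by (simp add: F_def xs_def)
qed

lemma gE_repl1_nth:
  assumes "e < length (gE G)" "j < length (gE H)"
  shows "gE (repl1 G e H) ! (e + j) = emap (h_node e H (fst (gE G ! e))) (gE H ! j)"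
  using assms unfolding gE_repl1[OF assms(1)] by (simp add: nth_append)

lemma length_gE_repl1:
  assumes "e < length (gE G)"
  shows "length (gE (repl1 G e H)) = length (gE G) - 1 + length (gE H)"
  using assms unfolding gE_repl1[OF assms(1)] by simp


lemma hg_struct_map[simp]: "hg_struct (map_hgraph f G) = hg_struct G"
  unfolding hg_struct_def by (auto simp: case_prod_beta)

lemma wfg_rest: "wfg G \<Longrightarrow> wf_edges (mset (gE G) - M)"
  unfolding wfg_alt wf_edges_def by (meson in_diffD)

lemma divL_decomp:
  assumes wH: "wfg H" and e: "e < length (gE H)" and eN: "snd (gE H ! e) = N"
    and wD: "wf_tp (Div N D)" and d0: "d0 < length (gE D)" "snd (gE D ! d0) = None"
    and hs: "\<And>j. j < length (gE D) \<Longrightarrow> j \<noteq> d0 \<Longrightarrow> hg_struct (Hs j) \<and> length (gext (Hs j)) = ttype (the (snd (gE D ! j)))"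
  shows "\<exists>\<phi> \<psi>. decomp (divL_graph H e N D d0 Hs) H {e} (\<lambda>i. gE H ! i)
     (\<lambda>_. repl (fill D (Div N D)) (\<lambda>j. if j < length (gE D) \<and> j \<noteq> d0 then Some (Hs j) else None)) \<phi> \<psi>"
proof -
  define K where "K = fill D (Div N D)"
  define Y where "Y = repl1 H e K"
  define r where "r = (\<lambda>i. if e \<le> i \<and> i < e + length (gE D) \<and> i \<noteq> e + d0 then Some (Hs (i - e)) else None)"
  define r' where "r' = (\<lambda>j. if j < length (gE D) \<and> j \<noteq> d0 then Some (Hs j) else None)"
  define J where "J = {j. j < length (gE D) \<and> j \<noteq> d0}"
  have X: "divL_graph H e N D d0 Hs = repl Y r" unfolding divL_graph_def Y_def K_def r_def ..
  have sH: "hg_struct H" using wH wfg_alt by blast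
  have sD: "hg_struct D" by (rule wf_Div_D(2)[OF wD])
  have sK: "hg_struct K" unfolding K_def fill_def using sD by simp
  have lK: "length (gE K) = length (gE D)" unfolding K_def fill_def by simp
  have fK: "fst (gE K ! j) = fst (gE D ! j)" if "j < length (gE D)" for j
    unfolding K_def fill_def using that by (simp add: case_prod_beta)
  have xK: "gext K = gext D" unfolding K_def fill_def by simp
  have tm1: "length (fst (gE H ! e)) = length (gext K)"
  proof -
    have "gE H ! e \<in> set (gE H)" using e by simp
    then have "length (fst (gE H ! e)) = ttype N" using wH eN unfolding wfg_def by (metis prod.collapse)
    then show ?thesis unfolding xK using wf_Div_D(5)[OF wD] by simp
  qed
  have d1: "decomp Y H {e} (\<lambda>i. gE H ! i) (\<lambda>_. K) g_node (\<lambda>i. h_node i K (fst (gE H ! i)))"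
    unfolding Y_def by (rule repl1_decomp[OF sH e sK tm1])
  have sY: "hg_struct Y" by (rule decomp_struct[OF d1])
  have lY: "length (gE Y) = length (gE H) - 1 + length (gE D)"
    unfolding Y_def length_gE_repl1[OF e] lK ..
  have Yj: "gE Y ! (e + j) = emap (h_node e K (fst (gE H ! e))) (gE K ! j)" if "j < length (gE D)" for j
    unfolding Y_def by (rule gE_repl1_nth[OF e]) (use that lK in simp)
  have tmj: "length (fst (gE D ! j)) = length (gext (Hs j))" if "j < length (gE D)" "j \<noteq> d0" for j
    using others_some[OF wD d0 that] hs[OF that] by auto
  have IY: "{i. i < length (gE Y) \<and> r i \<noteq> None} = (\<lambda>j. e + j) ` J"
  proof -
    have l: "e + j < length (gE Y)" if "j < length (gE D)" for j using that e lY by simp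
    show ?thesis
    proof (rule equalityI; rule subsetI)
      fix i assume "i \<in> {i. i < length (gE Y) \<and> r i \<noteq> None}"
      then have i: "e \<le> i" "i < e + length (gE D)" "i \<noteq> e + d0" unfolding r_def by (auto split: if_splits)
      then have "i - e \<in> J" "i = e + (i - e)" unfolding J_def by auto
      then show "i \<in> (\<lambda>j. e + j) ` J" by blast
    next
      fix i assume "i \<in> (\<lambda>j. e + j) ` J"
      then obtain j where "i = e + j" "j < length (gE D)" "j \<noteq> d0" unfolding J_def by blast
      then show "i \<in> {i. i < length (gE Y) \<and> r i \<noteq> None}" using l unfolding r_def by auto
    qed
  qed
  have d2: "decomp (repl Y r) Y {i. i < length (gE Y) \<and> r i \<noteq> None} (\<lambda>i. gE Y ! i) (\<lambda>i. the (r i)) g_node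
      (\<lambda>i. h_node i (the (r i)) (fst (gE Y ! i)))"
  proof (rule repl_decomp[OF sY])
    fix i H' assume i: "i < length (gE Y)" "r i = Some H'"
    then have ii: "e \<le> i" "i < e + length (gE D)" "i \<noteq> e + d0" "H' = Hs (i - e)"
      unfolding r_def by (auto split: if_splits)
    define j where "j = i - e"
    have j: "i = e + j" "j < length (gE D)" "j \<noteq> d0" "H' = Hs j" using ii unfolding j_def by auto
    show "hg_struct H' \<and> length (fst (gE Y ! i)) = length (gext H')"
      using hs[OF j(2,3)] tmj[OF j(2,3)] Yj[OF j(2)] fK[OF j(2)] j by simp
  qed
  have b: "bij_betw (\<lambda>j. e + j) J {i. i < length (gE Y) \<and> r i \<noteq> None}"
    unfolding IY by (rule inj_on_imp_bij_betw) (simp add: inj_on_def)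
  have d2': "decomp (repl Y r) Y J (\<lambda>j. gE Y ! (e + j)) Hs g_node (\<lambda>j. h_node (e + j) (Hs j) (fst (gE Y ! (e + j))))"
    using decomp_reindex[OF d2 b] by (rule decomp_cong) (auto simp: r_def J_def)
  have IZ: "{j. j < length (gE K) \<and> r' j \<noteq> None} = J" unfolding J_def r'_def lK by auto
  have d3: "decomp (repl K r') K {j. j < length (gE K) \<and> r' j \<noteq> None} (\<lambda>j. gE K ! j) (\<lambda>j. the (r' j)) g_node
      (\<lambda>j. h_node j (the (r' j)) (fst (gE K ! j)))"
  proof (rule repl_decomp[OF sK])
    fix j H' assume j: "j < length (gE K)" "r' j = Some H'"
    then have "j < length (gE D)" "j \<noteq> d0" "H' = Hs j" unfolding r'_def lK by (auto split: if_splits)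
    then show "hg_struct H' \<and> length (fst (gE K ! j)) = length (gext H')"
      using hs tmj fK by simp
  qed
  have d3': "decomp (repl K r') K J (\<lambda>j. gE K ! j) Hs g_node (\<lambda>j. h_node j (the (r' j)) (fst (gE K ! j)))"
    using d3 unfolding IZ by (rule decomp_cong) (auto simp: r'_def J_def)
  obtain \<psi>' where dd: "decomp (repl Y r) H {e} (\<lambda>i. gE H ! i) ((\<lambda>_. K)(e := repl K r')) (g_node \<circ> g_node) \<psi>'"
    using decomp_comp_in[OF d1 d2' _ _ d3'] Yj by (auto simp: J_def)
  have "decomp (repl Y r) H {e} (\<lambda>i. gE H ! i) (\<lambda>_. repl K r') (g_node \<circ> g_node) \<psi>'"
    using dd by (rule decomp_cong) auto
  then show ?thesis unfolding X K_def r'_def by blast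
qed


lemma plug_decomp:
  assumes wD: "wf_tp (Div N D)" and d0: "d0 < length (gE D)" "snd (gE D ! d0) = None"
    and sF: "hg_struct F" and lF: "length (gext F) = ttype (Div N D)"
  shows "decomp (plug D d0 F) (map_hgraph the D) {d0} (\<lambda>i. gE (map_hgraph the D) ! i) (\<lambda>_. F) g_node
     (\<lambda>i. h_node i F (fst (gE (map_hgraph the D) ! i)))"
  unfolding plug_def
proof (rule repl1_decomp)
  show "hg_struct (map_hgraph the D)" using wf_Div_D(2)[OF wD] by simp
  show "d0 < length (gE (map_hgraph the D))" using d0 by simp
  show "hg_struct F" by (rule sF)
  show "length (fst (gE (map_hgraph the D) ! d0)) = length (gext F)"
    using d0 lF ttype_Div[OF wD d0] by (simp add: case_prod_beta)
qed

lemma plug_rest: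
  assumes wD: "wf_tp (Div N D)" and d0: "d0 < length (gE D)" "snd (gE D ! d0) = None"
  shows "wf_edges (mset (gE (map_hgraph the D)) - esum {d0} (\<lambda>i. gE (map_hgraph the D) ! i))"
  unfolding wf_edges_def
proof
  fix x assume "x \<in># mset (gE (map_hgraph the D)) - esum {d0} (\<lambda>i. gE (map_hgraph the D) ! i)"
  then have "x \<in># mset (gE (map_hgraph the D)) - {#gE (map_hgraph the D) ! d0#}" by simp
  from in_diff_idx[OF this] d0 obtain i where i: "i < length (gE D)" "i \<noteq> d0" "gE (map_hgraph the D) ! i = x"
    by auto
  obtain t where t: "snd (gE D ! i) = Some t" "wf_tp t" "length (fst (gE D ! i)) = ttype t"
    using others_some[OF wD d0 i(1,2)] by blast
  have "x = (fst (gE D ! i), t)" using i(1,3) t(1) by (auto simp: case_prod_beta)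
  then show "wf_tp (snd x) \<and> length (fst x) = ttype (snd x)" using t by simp
qed

lemma plug_wfg:
  assumes wD: "wf_tp (Div N D)" and d0: "d0 < length (gE D)" "snd (gE D ! d0) = None"
    and wF: "wfg F" and lF: "length (gext F) = ttype (Div N D)"
  shows "wfg (plug D d0 F)"
  by (rule decomp_wfg[OF plug_decomp[OF wD d0 _ lF] plug_rest[OF wD d0]]) (use wF wfg_alt in auto)

lemma hiso_decomp:
  assumes s: "hg_struct G" and h: "hiso G G' f"
  shows "decomp G' G ({}::nat set) (\<lambda>_. undefined) (\<lambda>_. G) f (\<lambda>_. id)"
proof (rule decompI)
  show "inj_on f (gV G)" using h unfolding hiso_def bij_betw_def by blast
  show "gV G' = f ` gV G \<union> (\<Union>i\<in>{}. id ` gV G)" using h unfolding hiso_def bij_betw_def by simp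
  show "mset (gE G') = image_mset (emap f) (mset (gE G) - esum {} (\<lambda>_. undefined))
      + (\<Sum>i\<in>{}. image_mset (emap id) (mset (gE G)))" using h unfolding hiso_def by (simp add: esum_def)
  show "gext G' = map f (gext G)" using h unfolding hiso_def by simp
qed (use s in \<open>auto simp: esum_def\<close>)

lemma gext_repl_len[simp]: "length (gext (repl G r)) = length (gext G)"
  by (simp add: repl_def)

lemma gext_repl1_len[simp]: "length (gext (repl1 G e H)) = length (gext G)"
  by (simp add: repl1_def)

lemma HL_inv: "HL G A \<Longrightarrow> wfg G \<and> wf_tp A \<and> length (gext G) = ttype A"
proof (induction rule: HL.induct)
  case (Ax p n)
  have "wfg (handle (Prim p n) n)" unfolding wfg_def hg_struct_def handle_def by (auto intro: wf_tp.wf_Prim)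
  moreover have "wf_tp (Prim p n)" by (rule wf_tp.wf_Prim)
  ultimately show ?case by (simp add: handle_def)
next
  case (Iso G A G')
  obtain f where f: "hiso G G' f" using Iso.hyps(2) unfolding hg_iso_iff by blast
  have s: "hg_struct G" using Iso.IH wfg_alt by blast
  have "wfg G'" by (rule decomp_wfg[OF hiso_decomp[OF s f]]) (use Iso.IH wfg_alt in \<open>auto simp: esum_def\<close>)
  moreover have "length (gext G') = length (gext G)" using f unfolding hiso_def by simp
  ultimately show ?case using Iso.IH by simp
next
  case (DivL H A e N D d0 Hs)
  have hs: "hg_struct (Hs j) \<and> length (gext (Hs j)) = ttype (the (snd (gE D ! j)))"
    if "j < length (gE D)" "j \<noteq> d0" for j
    using DivL.IH(2) that wfg_alt by blast
  obtain \<phi> \<psi> where d: "decomp (divL_graph H e N D d0 Hs) H {e} (\<lambda>i. gE H ! i)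
     (\<lambda>_. repl (fill D (Div N D)) (\<lambda>j. if j < length (gE D) \<and> j \<noteq> d0 then Some (Hs j) else None)) \<phi> \<psi>"
    using divL_decomp[OF DivL.hyps(2,3,4,5,6,7) hs] by blast
  define K where "K = fill D (Div N D)"
  define r' where "r' = (\<lambda>j. if j < length (gE D) \<and> j \<noteq> d0 then Some (Hs j) else None)"
  have sK: "hg_struct K" unfolding K_def fill_def using wf_Div_D(2)[OF DivL.hyps(5)] by simp
  have lK: "length (gE K) = length (gE D)" unfolding K_def fill_def by simp
  have IZ: "{j. j < length (gE K) \<and> r' j \<noteq> None} = {..<length (gE K)} - {d0}" unfolding r'_def lK by auto
  have dK: "decomp (repl K r') K ({..<length (gE K)} - {d0}) (\<lambda>j. gE K ! j) (\<lambda>j. the (r' j)) g_node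
      (\<lambda>j. h_node j (the (r' j)) (fst (gE K ! j)))"
    unfolding IZ[symmetric]
  proof (rule repl_decomp[OF sK])
    fix j H' assume j: "j < length (gE K)" "r' j = Some H'"
    then have jj: "j < length (gE D)" "j \<noteq> d0" "H' = Hs j" unfolding r'_def lK by (auto split: if_splits)
    obtain t where t: "snd (gE D ! j) = Some t" "length (fst (gE D ! j)) = ttype t"
      using others_some[OF DivL.hyps(5,6,7) jj(1,2)] by blast
    have "fst (gE K ! j) = fst (gE D ! j)" unfolding K_def fill_def using jj by (simp add: case_prod_beta)
    then show "hg_struct H' \<and> length (fst (gE K ! j)) = length (gext H')"
      using hs[OF jj(1,2)] t jj by simp
  qed
  have restK: "wf_edges (mset (gE K) - esum ({..<length (gE K)} - {d0}) (\<lambda>j. gE K ! j))"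
  proof -
    have "mset (gE K) - esum ({..<length (gE K)} - {d0}) (\<lambda>j. gE K ! j) = {#gE K ! d0#}"
      using mset_minus_nth[of d0 "gE K"] DivL.hyps(6) lK
      by (metis add_diff_cancel_left' diff_union_cancelR mset_subset_eq_single nth_mem_mset subset_mset.add_diff_inverse)
    moreover have "gE K ! d0 = (fst (gE D ! d0), Div N D)"
      unfolding K_def fill_def using DivL.hyps(6,7) by (simp add: case_prod_beta)
    ultimately show ?thesis unfolding wf_edges_def using DivL.hyps(5) ttype_Div[OF DivL.hyps(5,6,7)] by simp
  qed
  have wZ: "wfg (repl K r')"
    by (rule decomp_wfg[OF dK restK]) (use DivL.IH(2) in \<open>auto simp: r'_def lK\<close>)
  have "wfg (divL_graph H e N D d0 Hs)"
    by (rule decomp_wfg[OF d]) (use wfg_rest[OF DivL.hyps(2)] wZ in \<open>auto simp: K_def r'_def\<close>)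
  moreover have "length (gext (divL_graph H e N D d0 Hs)) = length (gext H)" by (simp add: divL_graph_def)
  ultimately show ?case using DivL.IH(1) by simp
next
  case (DivR D d0 F N)
  then show ?case by simp
next
  case (TimesL G e F A)
  then show ?case by simp
next
  case (TimesR M Hs)
  define r where "r = (\<lambda>i. if i < length (gE M) then Some (Hs i) else None)"
  have sM: "hg_struct M" by (rule wf_Times_D(1)[OF TimesR.hyps(1)])
  have I: "{i. i < length (gE M) \<and> r i \<noteq> None} = {..<length (gE M)}" unfolding r_def by auto
  have d: "decomp (repl M r) M {..<length (gE M)} (\<lambda>i. gE M ! i) (\<lambda>i. the (r i)) g_node
      (\<lambda>i. h_node i (the (r i)) (fst (gE M ! i)))"
    unfolding I[symmetric]
  proof (rule repl_decomp[OF sM])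
    fix i H' assume i: "i < length (gE M)" "r i = Some H'"
    then have "H' = Hs i" unfolding r_def by simp
    moreover have "length (fst (gE M ! i)) = ttype (snd (gE M ! i))"
      using wf_Times_D(2)[OF TimesR.hyps(1)] i(1) by (metis nth_mem prod.collapse)
    ultimately show "hg_struct H' \<and> length (fst (gE M ! i)) = length (gext H')"
      using TimesR.IH i(1) wfg_alt by auto
  qed
  have "wfg (repl M r)"
  proof (rule decomp_wfg[OF d])
    show "wf_edges (mset (gE M) - esum {..<length (gE M)} (\<lambda>i. gE M ! i))"
      unfolding mset_nth_sum[of "gE M", symmetric] by (simp add: wf_edges_def)
    show "\<forall>i\<in>{..<length (gE M)}. wfg (the (r i))" using TimesR.IH by (simp add: r_def)
  qed
  then show ?case using TimesR.hyps(1) unfolding r_def by simp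
qed


lemma hiso_sym:
  assumes s: "hg_struct G" and h: "hiso G G' f"
  shows "hiso G' G (inv_into (gV G) f)"
proof -
  let ?g = "inv_into (gV G) f"
  have b: "bij_betw f (gV G) (gV G')" and E: "mset (gE G') = image_mset (emap f) (mset (gE G))"
    and x: "gext G' = map f (gext G)" using h unfolding hiso_def by auto
  have gf: "?g (f v) = v" if "v \<in> gV G" for v using bij_betw_inv_into_left[OF b that] .
  have "image_mset (emap ?g) (mset (gE G')) = image_mset (emap (?g \<circ> f)) (mset (gE G))"
    unfolding E image_emap_comp ..
  also have "\<dots> = image_mset (emap id) (mset (gE G))"
    by (rule image_emap_cong[where A = "gV G"]) (use struct_edge_sub[OF s] gf in auto)
  finally have E': "mset (gE G) = image_mset (emap ?g) (mset (gE G'))" by simp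
  have "map ?g (gext G') = gext G"
    unfolding x using s gf unfolding hg_struct_def by (auto intro!: map_idI)
  then show ?thesis unfolding hiso_def using bij_betw_inv_into[OF b] E' by simp
qed

lemma hg_iso_sym: "hg_struct G \<Longrightarrow> hg_iso G G' \<Longrightarrow> hg_iso G' G"
  unfolding hg_iso_iff using hiso_sym by blast

lemma hg_iso_refl: "hg_iso G G"
  unfolding hg_iso_iff using hiso_refl by blast

lemma hg_iso_D:
  assumes "hg_iso G G'"
  shows "\<exists>f \<pi>. hiso G G' f \<and> bij_betw \<pi> {..<length (gE G)} {..<length (gE G')}
     \<and> (\<forall>i<length (gE G). gE G' ! \<pi> i = emap f (gE G ! i))"
proof -
  obtain f \<pi> where f: "bij_betw f (gV G) (gV G')"
     and p: "bij_betw \<pi> {..<length (gE G)} {..<length (gE G')}"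
     and e: "\<forall>i < length (gE G). gE G' ! \<pi> i = (map f (fst (gE G ! i)), snd (gE G ! i))"
     and x: "gext G' = map f (gext G)" using assms unfolding hg_iso_def by blast
  have "mset (gE G') = image_mset (\<lambda>i. gE G' ! i) (mset [0..<length (gE G')])"
    by (metis map_nth mset_map)
  also have "\<dots> = image_mset (\<lambda>i. gE G' ! i) (image_mset \<pi> (mset [0..<length (gE G)]))"
    using mset_upt_image[OF p] by simp
  also have "\<dots> = image_mset (\<lambda>i. emap f (gE G ! i)) (mset [0..<length (gE G)])"
    by (simp add: image_mset.compositionality) (rule image_mset_cong, use e in \<open>auto simp: emap_def\<close>)
  also have "\<dots> = image_mset (emap f) (mset (gE G))"
  proof -
    have "map (\<lambda>i. emap f (gE G ! i)) [0..<length (gE G)] = map (emap f) (gE G)"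
      by (rule nth_equalityI) auto
    then show ?thesis by (metis mset_map)
  qed
  finally have "hiso G G' f" using f x unfolding hiso_def by blast
  then show ?thesis using p e by (auto simp: emap_def)
qed

lemma edge_wf:
  assumes "wfg G" "e < length (gE G)"
  shows "wf_tp (snd (gE G ! e)) \<and> length (fst (gE G ! e)) = ttype (snd (gE G ! e))"
  using assms unfolding wfg_def by (metis nth_mem prod.collapse)

lemma times_edge:
  assumes "wfg G" "e < length (gE G)" "snd (gE G ! e) = Times M"
  shows "wfg M" "hg_struct M" "length (fst (gE G ! e)) = length (gext M)"
  using edge_wf[OF assms(1,2)] assms(3) wf_Times_wfg wfg_alt by auto

lemma wfg_struct: "wfg G \<Longrightarrow> hg_struct G"
  using wfg_alt by blast

lemma repl1_wfg:
  assumes "wfg G" "e < length (gE G)" "wfg H" "length (fst (gE G ! e)) = length (gext H)"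
  shows "wfg (repl1 G e H)"
  by (rule decomp_wfg[OF repl1_decomp[OF wfg_struct[OF assms(1)] assms(2) wfg_struct[OF assms(3)] assms(4)]])
     (use wfg_rest[OF assms(1)] assms(3) in auto)

lemma Z_decomp:
  assumes wD: "wf_tp (Div N D)" and d0: "d0 < length (gE D)" "snd (gE D ! d0) = None"
    and hs: "\<And>j. j < length (gE D) \<Longrightarrow> j \<noteq> d0 \<Longrightarrow> hg_struct (Hs j) \<and> length (gext (Hs j)) = ttype (the (snd (gE D ! j)))"
  shows "decomp (repl (fill D (Div N D)) (\<lambda>j. if j < length (gE D) \<and> j \<noteq> d0 then Some (Hs j) else None))
     (fill D (Div N D)) ({..<length (gE D)} - {d0}) (\<lambda>j. gE (fill D (Div N D)) ! j) Hs g_node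
     (\<lambda>j. h_node j (Hs j) (fst (gE (fill D (Div N D)) ! j)))"
proof -
  define K where "K = fill D (Div N D)"
  define r' where "r' = (\<lambda>j. if j < length (gE D) \<and> j \<noteq> d0 then Some (Hs j) else None)"
  have sK: "hg_struct K" unfolding K_def fill_def using wf_Div_D(2)[OF wD] by simp
  have lK: "length (gE K) = length (gE D)" unfolding K_def fill_def by simp
  have IZ: "{j. j < length (gE K) \<and> r' j \<noteq> None} = {..<length (gE D)} - {d0}" unfolding r'_def lK by auto
  have dK: "decomp (repl K r') K {j. j < length (gE K) \<and> r' j \<noteq> None} (\<lambda>j. gE K ! j) (\<lambda>j. the (r' j)) g_node
      (\<lambda>j. h_node j (the (r' j)) (fst (gE K ! j)))"
  proof (rule repl_decomp[OF sK])
    fix j H' assume j: "j < length (gE K)" "r' j = Some H'"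
    then have jj: "j < length (gE D)" "j \<noteq> d0" "H' = Hs j" unfolding r'_def lK by (auto split: if_splits)
    obtain t where t: "snd (gE D ! j) = Some t" "length (fst (gE D ! j)) = ttype t"
      using others_some[OF wD d0 jj(1,2)] by blast
    have "fst (gE K ! j) = fst (gE D ! j)" unfolding K_def fill_def using jj by (simp add: case_prod_beta)
    then show "hg_struct H' \<and> length (fst (gE K ! j)) = length (gext H')"
      using hs[OF jj(1,2)] t jj by simp
  qed
  have "decomp (repl K r') K ({..<length (gE D)} - {d0}) (\<lambda>j. gE K ! j) Hs g_node
      (\<lambda>j. h_node j (Hs j) (fst (gE K ! j)))"
    using dK unfolding IZ by (rule decomp_cong) (auto simp: r'_def)
  then show ?thesis unfolding K_def r'_def .
qed

lemma Z_rest: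
  assumes wD: "wf_tp (Div N D)" and d0: "d0 < length (gE D)" "snd (gE D ! d0) = None"
  shows "mset (gE (fill D (Div N D))) - esum ({..<length (gE D)} - {d0}) (\<lambda>j. gE (fill D (Div N D)) ! j)
      = {#(fst (gE D ! d0), Div N D)#}"
proof -
  define K where "K = fill D (Div N D)"
  have lK: "length (gE K) = length (gE D)" unfolding K_def fill_def by simp
  have "mset (gE K) = esum {d0} (\<lambda>j. gE K ! j) + esum ({..<length (gE K)} - {d0}) (\<lambda>j. gE K ! j)"
    unfolding mset_nth_sum[of "gE K"] by (rule esum_split) (use d0 lK in auto)
  moreover have "gE K ! d0 = (fst (gE D ! d0), Div N D)"
    unfolding K_def fill_def using d0 by (simp add: case_prod_beta)
  ultimately show ?thesis unfolding K_def[symmetric] lK[symmetric] by simp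
qed

lemma timesR_decomp:
  assumes w: "wf_tp (Times M)"
    and hs: "\<And>i. i < length (gE M) \<Longrightarrow> hg_struct (Hs i) \<and> length (gext (Hs i)) = ttype (snd (gE M ! i))"
  shows "decomp (repl M (\<lambda>i. if i < length (gE M) then Some (Hs i) else None)) M {..<length (gE M)}
     (\<lambda>i. gE M ! i) Hs g_node (\<lambda>i. h_node i (Hs i) (fst (gE M ! i)))"
proof -
  define r where "r = (\<lambda>i. if i < length (gE M) then Some (Hs i) else None)"
  have sM: "hg_struct M" by (rule wf_Times_D(1)[OF w])
  have I: "{i. i < length (gE M) \<and> r i \<noteq> None} = {..<length (gE M)}" unfolding r_def by auto
  have d: "decomp (repl M r) M {i. i < length (gE M) \<and> r i \<noteq> None} (\<lambda>i. gE M ! i) (\<lambda>i. the (r i)) g_node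
      (\<lambda>i. h_node i (the (r i)) (fst (gE M ! i)))"
  proof (rule repl_decomp[OF sM])
    fix i H' assume i: "i < length (gE M)" "r i = Some H'"
    then have "H' = Hs i" unfolding r_def by simp
    moreover have "length (fst (gE M ! i)) = ttype (snd (gE M ! i))"
      using wf_Times_D(2)[OF w] i(1) by (metis nth_mem prod.collapse)
    ultimately show "hg_struct H' \<and> length (fst (gE M ! i)) = length (gext H')"
      using hs i(1) by auto
  qed
  have "decomp (repl M r) M {..<length (gE M)} (\<lambda>i. gE M ! i) Hs g_node (\<lambda>i. h_node i (Hs i) (fst (gE M ! i)))"
    using d unfolding I by (rule decomp_cong) (auto simp: r_def)
  then show ?thesis unfolding r_def .
qed

lemma part1:
  "HL H C \<Longrightarrow> (\<forall>e0 M. e0 < length (gE H) \<longrightarrow> snd (gE H ! e0) = Times M \<longrightarrow> HL (repl1 H e0 M) C)"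
proof (induction rule: HL.induct)
  case (Ax p n)
  show ?case by (simp add: handle_def)
next
  case (Iso G A G')
  show ?case
  proof (intro allI impI)
    fix e0 M assume e0: "e0 < length (gE G')" and l: "snd (gE G' ! e0) = Times M"
    obtain f \<pi> where f: "hiso G G' f" and p: "bij_betw \<pi> {..<length (gE G)} {..<length (gE G')}"
      and pe: "\<forall>i<length (gE G). gE G' ! \<pi> i = emap f (gE G ! i)" using hg_iso_D[OF Iso.hyps(2)] by blast
    obtain i where i: "i < length (gE G)" "\<pi> i = e0" using p e0 unfolding bij_betw_def by (metis imageE lessThan_iff)
    have gi: "gE G' ! e0 = emap f (gE G ! i)" using pe i by auto
    have li: "snd (gE G ! i) = Times M" using l gi by simp
    have HLi: "HL (repl1 G i M) A" using Iso.IH i li by blast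
    have wG: "wfg G" using HL_inv[OF Iso.hyps(1)] by blast
    have wG': "wfg G'" using HL_inv[OF HL.Iso[OF Iso.hyps]] by blast
    have dA: "decomp (repl1 G i M) G {i} (\<lambda>j. gE G ! j) (\<lambda>_. M) g_node (\<lambda>j. h_node j M (fst (gE G ! j)))"
      by (rule repl1_decomp[OF wfg_struct[OF wG] i(1) times_edge(2,3)[OF wG i(1) li]])
    have dB: "decomp (repl1 G' e0 M) G' {e0} (\<lambda>j. gE G' ! j) (\<lambda>_. M) g_node (\<lambda>j. h_node j M (fst (gE G' ! j)))"
      by (rule repl1_decomp[OF wfg_struct[OF wG'] e0 times_edge(2,3)[OF wG' e0 l]])
    have t: "bij_betw (\<lambda>_. e0) {i} {e0}" by (simp add: bij_betw_def)
    have dB': "decomp (repl1 G' e0 M) G' {i} ((\<lambda>j. gE G' ! j) \<circ> (\<lambda>_. e0)) ((\<lambda>_. M) \<circ> (\<lambda>_. e0)) g_node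
        ((\<lambda>j. h_node j M (fst (gE G' ! j))) \<circ> (\<lambda>_. e0))"
      by (rule decomp_reindex[OF dB t])
    have "hg_iso (repl1 G i M) (repl1 G' e0 M)"
      by (rule decomp_unique[OF dA dB' f, where f = "\<lambda>_. id"]) (auto simp: gi hiso_refl)
    then show "HL (repl1 G' e0 M) A" by (rule HL.Iso[OF HLi])
  qed
next
  case (DivL H A e N D d0 Hs)
  have hsHL: "HL (Hs j) (the (snd (gE D ! j)))" if "j < length (gE D)" "j \<noteq> d0" for j
    using DivL.IH(2) that by blast
  have hsIH: "HL (repl1 (Hs j) e3 M) (the (snd (gE D ! j)))"
    if "j < length (gE D)" "j \<noteq> d0" "e3 < length (gE (Hs j))" "snd (gE (Hs j) ! e3) = Times M" for j e3 M
    using DivL.IH(2) that by blast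
  have hs: "hg_struct (Hs j) \<and> length (gext (Hs j)) = ttype (the (snd (gE D ! j)))"
    if "j < length (gE D)" "j \<noteq> d0" for j
    using HL_inv[OF hsHL[OF that]] wfg_struct by blast
  have wH: "wfg H" by (rule DivL.hyps(2))
  have wD: "wf_tp (Div N D)" by (rule DivL.hyps(5))
  have HLX: "HL (divL_graph H e N D d0 Hs) A"
    by (rule HL.DivL[OF DivL.hyps(1-7)]) (use hsHL in blast)
  have wX: "wfg (divL_graph H e N D d0 Hs)" using HL_inv[OF HLX] by blast
  define X where "X = divL_graph H e N D d0 Hs"
  define K where "K = fill D (Div N D)"
  define Z where "Z = repl K (\<lambda>j. if j < length (gE D) \<and> j \<noteq> d0 then Some (Hs j) else None)"
  obtain \<phi> \<psi> where d: "decomp X H {e} (\<lambda>i. gE H ! i) (\<lambda>_. Z) \<phi> \<psi>"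
    using divL_decomp[OF wH DivL.hyps(3,4) wD DivL.hyps(6,7) hs] unfolding X_def Z_def K_def by blast
  show ?case
  proof (intro allI impI)
    fix e0 M assume e0: "e0 < length (gE (divL_graph H e N D d0 Hs))"
      and l: "snd (gE (divL_graph H e N D d0 Hs) ! e0) = Times M"
    then have e0: "e0 < length (gE X)" and l: "snd (gE X ! e0) = Times M" unfolding X_def by auto
    have wX: "wfg X" using wX unfolding X_def .
    note tmX = times_edge[OF wX e0 l]
    have dX0: "decomp (repl1 X e0 M) X {e0} (\<lambda>i. gE X ! i) (\<lambda>_. M) g_node (\<lambda>i. h_node i M (fst (gE X ! i)))"
      by (rule repl1_decomp[OF wfg_struct[OF wX] e0 tmX(2,3)])
    have "gE X ! e0 \<in> set (gE X)" using e0 by simp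
    from decomp_loc[OF d this] show "HL (repl1 (divL_graph H e N D d0 Hs) e0 M) A"
    proof
      assume "\<exists>y. y \<in># mset (gE H) - esum {e} (\<lambda>i. gE H ! i) \<and> gE X ! e0 = emap \<phi> y"
      then obtain y where y: "y \<in># mset (gE H) - {#gE H ! e#}" "gE X ! e0 = emap \<phi> y" by auto
      obtain e1 where e1: "e1 < length (gE H)" "e1 \<noteq> e" "gE H ! e1 = y"
        using in_diff_idx[OF y(1) DivL.hyps(3)] by blast
      have l1: "snd (gE H ! e1) = Times M" using l y(2) e1(3) by simp
      have HL1: "HL (repl1 H e1 M) A" using DivL.IH(1) e1(1) l1 by blast
      note tm1 = times_edge[OF wH e1(1) l1]
      have d1': "decomp (repl1 H e1 M) H {e1} (\<lambda>i. gE H ! i) (\<lambda>_. M) g_node (\<lambda>i. h_node i M (fst (gE H ! i)))"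
        by (rule repl1_decomp[OF wfg_struct[OF wH] e1(1) tm1(2,3)])
      have wY': "wfg (repl1 H e1 M)" by (rule repl1_wfg[OF wH e1(1) tm1(1,3)])
      have "gE H ! e \<in># mset (gE H) - esum {e1} (\<lambda>i. gE H ! i)"
        using nth_in_diff[OF DivL.hyps(3) e1(1)] e1(2) by simp
      from decomp_edge_rest[OF d1' this] obtain e' where
        e': "e' < length (gE (repl1 H e1 M))" "gE (repl1 H e1 M) ! e' = emap g_node (gE H ! e)" by blast
      have le': "snd (gE (repl1 H e1 M) ! e') = N" using e'(2) DivL.hyps(4) by simp
      have HL2: "HL (divL_graph (repl1 H e1 M) e' N D d0 Hs) A"
        by (rule HL.DivL[OF HL1 wY' e'(1) le' wD DivL.hyps(6,7)]) (use hsHL in blast)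
      obtain \<phi>2 \<psi>2 where d2: "decomp (divL_graph (repl1 H e1 M) e' N D d0 Hs) (repl1 H e1 M) {e'}
          (\<lambda>i. gE (repl1 H e1 M) ! i) (\<lambda>_. Z) \<phi>2 \<psi>2"
        using divL_decomp[OF wY' e'(1) le' wD DivL.hyps(6,7) hs] unfolding Z_def K_def by blast
      have "hg_iso (divL_graph (repl1 H e1 M) e' N D d0 Hs) (repl1 X e0 M)"
        by (rule swap_iso[OF d1' d e1(1) DivL.hyps(3) e1(2) e'(2) _ d2 dX0]) (use y(2) e1(3) in simp)
      from HL.Iso[OF HL2 this] show ?thesis unfolding X_def .
    next
      assume "\<exists>i\<in>{e}. \<exists>y\<in>set (gE Z). gE X ! e0 = emap (\<psi> i) y"
      then obtain y where y: "y \<in> set (gE Z)" "gE X ! e0 = emap (\<psi> e) y" by blast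
      have ly: "snd y = Times M" using l y(2) by simp
      have dK: "decomp Z K ({..<length (gE D)} - {d0}) (\<lambda>j. gE K ! j) Hs g_node
         (\<lambda>j. h_node j (Hs j) (fst (gE K ! j)))"
        unfolding Z_def K_def by (rule Z_decomp[OF wD DivL.hyps(6,7) hs])
      from decomp_loc[OF dK y(1)] show ?thesis
      proof
        assume "\<exists>y'. y' \<in># mset (gE K) - esum ({..<length (gE D)} - {d0}) (\<lambda>j. gE K ! j) \<and> y = emap g_node y'"
        then obtain y' where "y' \<in># {#(fst (gE D ! d0), Div N D)#}" "y = emap g_node y'"
          unfolding K_def Z_rest[OF wD DivL.hyps(6,7)] by blast
        then have "snd y = Div N D" by simp
        then show ?thesis using ly by simp
      next
        assume "\<exists>j\<in>{..<length (gE D)} - {d0}. \<exists>y'\<in>set (gE (Hs j)). y = emap (h_node j (Hs j) (fst (gE K ! j))) y'"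
        then obtain j y' where j: "j < length (gE D)" "j \<noteq> d0" and y': "y' \<in> set (gE (Hs j))"
          "y = emap (h_node j (Hs j) (fst (gE K ! j))) y'" by blast
        obtain e3 where e3: "e3 < length (gE (Hs j))" "gE (Hs j) ! e3 = y'" using y'(1) by (metis in_set_conv_nth)
        have l3: "snd (gE (Hs j) ! e3) = Times M" using ly y'(2) e3(2) by simp
        define W3 where "W3 = repl1 (Hs j) e3 M"
        have HL3: "HL W3 (the (snd (gE D ! j)))" unfolding W3_def by (rule hsIH[OF j e3(1) l3])
        define Hs' where "Hs' = Hs(j := W3)"
        have hsHL': "HL (Hs' j') (the (snd (gE D ! j')))" if "j' < length (gE D)" "j' \<noteq> d0" for j'
          using hsHL[OF that] HL3 unfolding Hs'_def by auto
        have hs': "hg_struct (Hs' j') \<and> length (gext (Hs' j')) = ttype (the (snd (gE D ! j')))"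
          if "j' < length (gE D)" "j' \<noteq> d0" for j'
          using HL_inv[OF hsHL'[OF that]] wfg_struct by blast
        have HLX': "HL (divL_graph H e N D d0 Hs') A"
          by (rule HL.DivL[OF DivL.hyps(1-7)]) (use hsHL' in blast)
        define Z' where "Z' = repl K (\<lambda>j. if j < length (gE D) \<and> j \<noteq> d0 then Some (Hs' j) else None)"
        obtain \<phi>' \<psi>' where d': "decomp (divL_graph H e N D d0 Hs') H {e} (\<lambda>i. gE H ! i) (\<lambda>_. Z') \<phi>' \<psi>'"
          using divL_decomp[OF wH DivL.hyps(3,4) wD DivL.hyps(6,7) hs'] unfolding Z'_def K_def by blast
        have dK': "decomp Z' K ({..<length (gE D)} - {d0}) (\<lambda>j. gE K ! j) Hs' g_node
           (\<lambda>j. h_node j (Hs' j) (fst (gE K ! j)))"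
          unfolding Z'_def K_def by (rule Z_decomp[OF wD DivL.hyps(6,7) hs'])
        obtain e2 where e2: "e2 < length (gE Z)" "gE Z ! e2 = y" using y(1) by (metis in_set_conv_nth)
        have sZ: "hg_struct Z" by (rule decomp_struct[OF dK])
        have len2: "length (fst (gE Z ! e2)) = length (gext M)" using tmX(3) y(2) e2(2) by simp
        have dW: "decomp (repl1 Z e2 M) Z {e2} (\<lambda>i. gE Z ! i) (\<lambda>_. M) g_node (\<lambda>i. h_node i M (fst (gE Z ! i)))"
          by (rule repl1_decomp[OF sZ e2(1) tmX(2) len2])
        have wHj: "wfg (Hs j)" using HL_inv[OF hsHL[OF j]] by blast
        have dW3: "decomp W3 (Hs j) {e3} (\<lambda>i. gE (Hs j) ! i) (\<lambda>_. M) g_node (\<lambda>i. h_node i M (fst (gE (Hs j) ! i)))"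
          unfolding W3_def by (rule repl1_decomp[OF wfg_struct[OF wHj] e3(1) times_edge(2,3)[OF wHj e3(1) l3]])
        have iso2: "hg_iso (repl1 Z e2 M) Z'"
        proof (rule nest_iso[OF dK _ _ dW dW3 dK'])
          show "j \<in> {..<length (gE D)} - {d0}" using j by simp
          show "gE Z ! e2 = emap (h_node j (Hs j) (fst (gE K ! j))) (gE (Hs j) ! e3)" using e2(2) y'(2) e3(2) by simp
          show "Hs' i = Hs i" if "i \<in> {..<length (gE D)} - {d0}" "i \<noteq> j" for i using that by (simp add: Hs'_def)
          show "hg_iso W3 (Hs' j)" by (simp add: Hs'_def hg_iso_refl)
        qed
        have iso1: "hg_iso (repl1 X e0 M) (divL_graph H e N D d0 Hs')"
        proof (rule nest_iso[OF d _ _ dX0 dW d'])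
          show "e \<in> {e}" by simp
          show "gE X ! e0 = emap (\<psi> e) (gE Z ! e2)" using y(2) e2(2) by simp
          show "(\<lambda>_. Z') i = (\<lambda>_. Z) i" if "i \<in> {e}" "i \<noteq> e" for i using that by simp
          show "hg_iso (repl1 Z e2 M) ((\<lambda>_. Z') e)" using iso2 by simp
        qed
        have "hg_iso (divL_graph H e N D d0 Hs') (repl1 X e0 M)"
          by (rule hg_iso_sym[OF decomp_struct[OF dX0] iso1])
        from HL.Iso[OF HLX' this] show ?thesis unfolding X_def .
      qed
    qed
  qed
next
  case (DivR D d0 F N)
  show ?case
  proof (intro allI impI)
    fix e0 M assume e0: "e0 < length (gE F)" and l: "snd (gE F ! e0) = Times M"
    have wD: "wf_tp (Div N D)" by (rule DivR.hyps(2))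
    have wF: "wfg F" by (rule DivR.hyps(5))
    note tm = times_edge[OF wF e0 l]
    define Y where "Y = plug D d0 F"
    have dP: "decomp Y (map_hgraph the D) {d0} (\<lambda>i. gE (map_hgraph the D) ! i) (\<lambda>_. F) g_node
       (\<lambda>i. h_node i F (fst (gE (map_hgraph the D) ! i)))"
      unfolding Y_def by (rule plug_decomp[OF wD DivR.hyps(3,4) wfg_struct[OF wF] DivR.hyps(6)])
    obtain e0' where e0': "e0' < length (gE Y)"
      "gE Y ! e0' = emap (h_node d0 F (fst (gE (map_hgraph the D) ! d0))) (gE F ! e0)"
      using decomp_edge_in[OF dP _ nth_mem[OF e0]] by auto
    have l0: "snd (gE Y ! e0') = Times M" using e0'(2) l by simp
    have HL1: "HL (repl1 Y e0' M) N" using DivR.IH e0'(1) l0 unfolding Y_def by blast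
    define W where "W = repl1 F e0 M"
    have wW: "wfg W" unfolding W_def by (rule repl1_wfg[OF wF e0 tm(1,3)])
    have lW: "length (gext W) = ttype (Div N D)" unfolding W_def using DivR.hyps(6) by simp
    have dY: "decomp (repl1 Y e0' M) Y {e0'} (\<lambda>i. gE Y ! i) (\<lambda>_. M) g_node (\<lambda>i. h_node i M (fst (gE Y ! i)))"
      by (rule repl1_decomp[OF decomp_struct[OF dP] e0'(1) tm(2)]) (use e0'(2) tm(3) in simp)
    have dF: "decomp W F {e0} (\<lambda>i. gE F ! i) (\<lambda>_. M) g_node (\<lambda>i. h_node i M (fst (gE F ! i)))"
      unfolding W_def by (rule repl1_decomp[OF wfg_struct[OF wF] e0 tm(2,3)])
    have dP': "decomp (plug D d0 W) (map_hgraph the D) {d0} (\<lambda>i. gE (map_hgraph the D) ! i) (\<lambda>_. W) g_node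
       (\<lambda>i. h_node i W (fst (gE (map_hgraph the D) ! i)))"
      by (rule plug_decomp[OF wD DivR.hyps(3,4) wfg_struct[OF wW] lW])
    have "hg_iso (repl1 Y e0' M) (plug D d0 W)"
      by (rule nest_iso[OF dP _ e0'(2) dY dF dP']) (auto simp: hg_iso_refl)
    from HL.Iso[OF HL1 this] have "HL (plug D d0 W) N" .
    from HL.DivR[OF this wD DivR.hyps(3,4) wW lW] show "HL (repl1 F e0 M) (Div N D)" unfolding W_def .
  qed
next
  case (TimesL G e F A)
  show ?case
  proof (intro allI impI)
    fix e0 M assume e0: "e0 < length (gE G)" and l: "snd (gE G ! e0) = Times M"
    show "HL (repl1 G e0 M) A"
    proof (cases "e0 = e")
      case True
      then have "M = F" using l TimesL.hyps(4) by simp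
      then show ?thesis using TimesL.hyps(1) True by simp
    next
      case False
      have wG: "wfg G" by (rule TimesL.hyps(2))
      note tmF = times_edge[OF wG TimesL.hyps(3,4)]
      note tmM = times_edge[OF wG e0 l]
      define Y where "Y = repl1 G e F"
      define Y' where "Y' = repl1 G e0 M"
      have d1: "decomp Y G {e} (\<lambda>i. gE G ! i) (\<lambda>_. F) g_node (\<lambda>i. h_node i F (fst (gE G ! i)))"
        unfolding Y_def by (rule repl1_decomp[OF wfg_struct[OF wG] TimesL.hyps(3) tmF(2,3)])
      have d1': "decomp Y' G {e0} (\<lambda>i. gE G ! i) (\<lambda>_. M) g_node (\<lambda>i. h_node i M (fst (gE G ! i)))"
        unfolding Y'_def by (rule repl1_decomp[OF wfg_struct[OF wG] e0 tmM(2,3)])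
      have "gE G ! e0 \<in># mset (gE G) - esum {e} (\<lambda>i. gE G ! i)"
        using nth_in_diff[OF e0 TimesL.hyps(3) False] by simp
      from decomp_edge_rest[OF d1 this] obtain e0' where
        e0': "e0' < length (gE Y)" "gE Y ! e0' = emap g_node (gE G ! e0)" by blast
      have "gE G ! e \<in># mset (gE G) - esum {e0} (\<lambda>i. gE G ! i)"
        using nth_in_diff[OF TimesL.hyps(3) e0] False by simp
      from decomp_edge_rest[OF d1' this] obtain e' where
        e': "e' < length (gE Y')" "gE Y' ! e' = emap g_node (gE G ! e)" by blast
      have HL1: "HL (repl1 Y e0' M) A" using TimesL.IH e0'(1) e0'(2) l unfolding Y_def by simp
      have d2: "decomp (repl1 Y e0' M) Y {e0'} (\<lambda>i. gE Y ! i) (\<lambda>_. M) g_node (\<lambda>i. h_node i M (fst (gE Y ! i)))"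
        by (rule repl1_decomp[OF decomp_struct[OF d1] e0'(1) tmM(2)]) (use e0'(2) tmM(3) in simp)
      have d2': "decomp (repl1 Y' e' F) Y' {e'} (\<lambda>i. gE Y' ! i) (\<lambda>_. F) g_node (\<lambda>i. h_node i F (fst (gE Y' ! i)))"
        by (rule repl1_decomp[OF decomp_struct[OF d1'] e'(1) tmF(2)]) (use e'(2) tmF(3) in simp)
      have "hg_iso (repl1 Y e0' M) (repl1 Y' e' F)"
        by (rule swap_iso[OF d1 d1' TimesL.hyps(3) e0 _ e0'(2) e'(2) d2 d2']) (use False in simp)
      from HL.Iso[OF HL1 this] have "HL (repl1 Y' e' F) A" .
      moreover have "wfg Y'" unfolding Y'_def by (rule repl1_wfg[OF wG e0 tmM(1,3)])
      moreover have "snd (gE Y' ! e') = Times F" using e'(2) TimesL.hyps(4) by simp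
      ultimately have "HL Y' A" by (rule HL.TimesL[OF _ _ e'(1)])
      then show ?thesis unfolding Y'_def .
    qed
  qed
next
  case (TimesR M' Hs)
  have hsHL: "HL (Hs i) (snd (gE M' ! i))" if "i < length (gE M')" for i
    using TimesR.IH that by blast
  have hsIH: "HL (repl1 (Hs i) e1 M) (snd (gE M' ! i))"
    if "i < length (gE M')" "e1 < length (gE (Hs i))" "snd (gE (Hs i) ! e1) = Times M" for i e1 M
    using TimesR.IH that by blast
  have hs: "hg_struct (Hs i) \<and> length (gext (Hs i)) = ttype (snd (gE M' ! i))" if "i < length (gE M')" for i
    using HL_inv[OF hsHL[OF that]] wfg_struct by blast
  define X where "X = repl M' (\<lambda>i. if i < length (gE M') then Some (Hs i) else None)"
  have HLX: "HL X (Times M')" unfolding X_def by (rule HL.TimesR[OF TimesR.hyps(1)]) (use hsHL in blast)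
  have wX: "wfg X" using HL_inv[OF HLX] by blast
  have dM: "decomp X M' {..<length (gE M')} (\<lambda>i. gE M' ! i) Hs g_node (\<lambda>i. h_node i (Hs i) (fst (gE M' ! i)))"
    unfolding X_def by (rule timesR_decomp[OF TimesR.hyps(1) hs])
  show ?case
  proof (intro allI impI)
    fix e0 M assume e0: "e0 < length (gE (repl M' (\<lambda>i. if i < length (gE M') then Some (Hs i) else None)))"
      and l: "snd (gE (repl M' (\<lambda>i. if i < length (gE M') then Some (Hs i) else None)) ! e0) = Times M"
    then have e0: "e0 < length (gE X)" and l: "snd (gE X ! e0) = Times M" unfolding X_def by auto
    note tmX = times_edge[OF wX e0 l]
    have "gE X ! e0 \<in> set (gE X)" using e0 by simp
    from decomp_loc[OF dM this] show "HL (repl1 (repl M' (\<lambda>i. if i < length (gE M') then Some (Hs i) else None)) e0 M) (Times M')"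
    proof
      assume "\<exists>y. y \<in># mset (gE M') - esum {..<length (gE M')} (\<lambda>i. gE M' ! i) \<and> gE X ! e0 = emap g_node y"
      then show ?thesis unfolding mset_nth_sum[of "gE M'", symmetric] by simp
    next
      assume "\<exists>i\<in>{..<length (gE M')}. \<exists>y\<in>set (gE (Hs i)). gE X ! e0 = emap (h_node i (Hs i) (fst (gE M' ! i))) y"
      then obtain i y where i: "i < length (gE M')" and y: "y \<in> set (gE (Hs i))"
        "gE X ! e0 = emap (h_node i (Hs i) (fst (gE M' ! i))) y" by blast
      obtain e1 where e1: "e1 < length (gE (Hs i))" "gE (Hs i) ! e1 = y" using y(1) by (metis in_set_conv_nth)
      have l1: "snd (gE (Hs i) ! e1) = Times M" using l y(2) e1(2) by simp
      define W where "W = repl1 (Hs i) e1 M"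
      have HLW: "HL W (snd (gE M' ! i))" unfolding W_def by (rule hsIH[OF i e1(1) l1])
      define Hs' where "Hs' = Hs(i := W)"
      have hsHL': "HL (Hs' i') (snd (gE M' ! i'))" if "i' < length (gE M')" for i'
        using hsHL[OF that] HLW unfolding Hs'_def by auto
      have hs': "hg_struct (Hs' i') \<and> length (gext (Hs' i')) = ttype (snd (gE M' ! i'))" if "i' < length (gE M')" for i'
        using HL_inv[OF hsHL'[OF that]] wfg_struct by blast
      define X' where "X' = repl M' (\<lambda>i. if i < length (gE M') then Some (Hs' i) else None)"
      have HLX': "HL X' (Times M')" unfolding X'_def by (rule HL.TimesR[OF TimesR.hyps(1)]) (use hsHL' in blast)
      have dM': "decomp X' M' {..<length (gE M')} (\<lambda>i. gE M' ! i) Hs' g_node (\<lambda>i. h_node i (Hs' i) (fst (gE M' ! i)))"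
        unfolding X'_def by (rule timesR_decomp[OF TimesR.hyps(1) hs'])
      have dX0: "decomp (repl1 X e0 M) X {e0} (\<lambda>i. gE X ! i) (\<lambda>_. M) g_node (\<lambda>i. h_node i M (fst (gE X ! i)))"
        by (rule repl1_decomp[OF wfg_struct[OF wX] e0 tmX(2,3)])
      have wHi: "wfg (Hs i)" using HL_inv[OF hsHL[OF i]] by blast
      have dW: "decomp W (Hs i) {e1} (\<lambda>j. gE (Hs i) ! j) (\<lambda>_. M) g_node (\<lambda>j. h_node j M (fst (gE (Hs i) ! j)))"
        unfolding W_def by (rule repl1_decomp[OF wfg_struct[OF wHi] e1(1) times_edge(2,3)[OF wHi e1(1) l1]])
      have "hg_iso (repl1 X e0 M) X'"
      proof (rule nest_iso[OF dM _ _ dX0 dW dM'])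
        show "i \<in> {..<length (gE M')}" using i by simp
        show "gE X ! e0 = emap (h_node i (Hs i) (fst (gE M' ! i))) (gE (Hs i) ! e1)" using y(2) e1(2) by simp
        show "Hs' j = Hs j" if "j \<in> {..<length (gE M')}" "j \<noteq> i" for j using that by (simp add: Hs'_def)
        show "hg_iso W (Hs' i)" by (simp add: Hs'_def hg_iso_refl)
      qed
      then have "hg_iso X' (repl1 X e0 M)" by (rule hg_iso_sym[OF decomp_struct[OF dX0]])
      from HL.Iso[OF HLX' this] show ?thesis unfolding X_def .
    qed
  qed
qed


lemma part2:
  "HL H A \<Longrightarrow> (\<forall>N D e0. A = Div N D \<longrightarrow> e0 < length (gE D) \<longrightarrow> snd (gE D ! e0) = None \<longrightarrow> HL (plug D e0 H) N)"
proof (induction rule: HL.induct)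
  case (Ax p n)
  show ?case by simp
next
  case (Iso G A G')
  show ?case
  proof (intro allI impI)
    fix N D e0 assume A: "A = Div N D" and e0: "e0 < length (gE D)" and n: "snd (gE D ! e0) = None"
    have HL1: "HL (plug D e0 G) N" using Iso.IH A e0 n by blast
    have iG: "wfg G \<and> wf_tp A \<and> length (gext G) = ttype A" by (rule HL_inv[OF Iso.hyps(1)])
    have iG': "wfg G' \<and> wf_tp A \<and> length (gext G') = ttype A" by (rule HL_inv[OF HL.Iso[OF Iso.hyps]])
    have wD: "wf_tp (Div N D)" using iG A by simp
    obtain f where f: "hiso G G' f" using Iso.hyps(2) unfolding hg_iso_iff by blast
    have dA: "decomp (plug D e0 G) (map_hgraph the D) {e0} (\<lambda>i. gE (map_hgraph the D) ! i) (\<lambda>_. G) g_node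
       (\<lambda>i. h_node i G (fst (gE (map_hgraph the D) ! i)))"
      by (rule plug_decomp[OF wD e0 n]) (use iG A wfg_struct in auto)
    have dB: "decomp (plug D e0 G') (map_hgraph the D) {e0} (\<lambda>i. gE (map_hgraph the D) ! i) (\<lambda>_. G') g_node
       (\<lambda>i. h_node i G' (fst (gE (map_hgraph the D) ! i)))"
      by (rule plug_decomp[OF wD e0 n]) (use iG' A wfg_struct in auto)
    have "hg_iso (plug D e0 G) (plug D e0 G')"
      by (rule decomp_unique[OF dA dB hiso_refl, where f = "\<lambda>_. f"]) (use f in auto)
    from HL.Iso[OF HL1 this] show "HL (plug D e0 G') N" .
  qed
next
  case (DivL H A e N' D' d0' Hs)
  have hsHL: "HL (Hs j) (the (snd (gE D' ! j)))" if "j < length (gE D')" "j \<noteq> d0'" for j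
    using DivL.IH(2) that by blast
  have hs: "hg_struct (Hs j) \<and> length (gext (Hs j)) = ttype (the (snd (gE D' ! j)))"
    if "j < length (gE D')" "j \<noteq> d0'" for j
    using HL_inv[OF hsHL[OF that]] wfg_struct by blast
  have wH: "wfg H" by (rule DivL.hyps(2))
  have wD': "wf_tp (Div N' D')" by (rule DivL.hyps(5))
  have HLX: "HL (divL_graph H e N' D' d0' Hs) A"
    by (rule HL.DivL[OF DivL.hyps(1-7)]) (use hsHL in blast)
  show ?case
  proof (intro allI impI)
    fix N D e0 assume A: "A = Div N D" and e0: "e0 < length (gE D)" and n: "snd (gE D ! e0) = None"
    have HL1: "HL (plug D e0 H) N" using DivL.IH(1) A e0 n by blast
    have iH: "wfg H \<and> wf_tp A \<and> length (gext H) = ttype A" by (rule HL_inv[OF DivL.hyps(1)])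
    have iX: "wfg (divL_graph H e N' D' d0' Hs) \<and> wf_tp A \<and> length (gext (divL_graph H e N' D' d0' Hs)) = ttype A"
      by (rule HL_inv[OF HLX])
    have wD: "wf_tp (Div N D)" using iH A by simp
    define P where "P = plug D e0 H"
    have dP: "decomp P (map_hgraph the D) {e0} (\<lambda>i. gE (map_hgraph the D) ! i) (\<lambda>_. H) g_node
       (\<lambda>i. h_node i H (fst (gE (map_hgraph the D) ! i)))"
      unfolding P_def by (rule plug_decomp[OF wD e0 n]) (use iH A wfg_struct in auto)
    have wP: "wfg P" unfolding P_def by (rule plug_wfg[OF wD e0 n wH]) (use iH A in simp)
    obtain e' where e': "e' < length (gE P)"
      "gE P ! e' = emap (h_node e0 H (fst (gE (map_hgraph the D) ! e0))) (gE H ! e)"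
      using decomp_edge_in[OF dP _ nth_mem[OF DivL.hyps(3)]] by auto
    have le': "snd (gE P ! e') = N'" using e'(2) DivL.hyps(4) by simp
    have HL2: "HL (divL_graph P e' N' D' d0' Hs) N"
      by (rule HL.DivL[OF HL1[folded P_def] wP e'(1) le' wD' DivL.hyps(6,7)]) (use hsHL in blast)
    define Z where "Z = repl (fill D' (Div N' D')) (\<lambda>j. if j < length (gE D') \<and> j \<noteq> d0' then Some (Hs j) else None)"
    obtain \<phi>2 \<psi>2 where d2: "decomp (divL_graph P e' N' D' d0' Hs) P {e'} (\<lambda>i. gE P ! i) (\<lambda>_. Z) \<phi>2 \<psi>2"
      using divL_decomp[OF wP e'(1) le' wD' DivL.hyps(6,7) hs] unfolding Z_def by blast
    obtain \<phi>3 \<psi>3 where d3: "decomp (divL_graph H e N' D' d0' Hs) H {e} (\<lambda>i. gE H ! i) (\<lambda>_. Z) \<phi>3 \<psi>3"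
      using divL_decomp[OF wH DivL.hyps(3,4) wD' DivL.hyps(6,7) hs] unfolding Z_def by blast
    have dP': "decomp (plug D e0 (divL_graph H e N' D' d0' Hs)) (map_hgraph the D) {e0}
       (\<lambda>i. gE (map_hgraph the D) ! i) (\<lambda>_. divL_graph H e N' D' d0' Hs) g_node
       (\<lambda>i. h_node i (divL_graph H e N' D' d0' Hs) (fst (gE (map_hgraph the D) ! i)))"
      by (rule plug_decomp[OF wD e0 n]) (use iX A wfg_struct in auto)
    have "hg_iso (divL_graph P e' N' D' d0' Hs) (plug D e0 (divL_graph H e N' D' d0' Hs))"
      by (rule nest_iso[OF dP _ e'(2) d2 d3 dP']) (auto simp: hg_iso_refl)
    from HL.Iso[OF HL2 this] show "HL (plug D e0 (divL_graph H e N' D' d0' Hs)) N" .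
  qed
next
  case (DivR D d0 F N)
  show ?case
  proof (intro allI impI)
    fix N' D' e0 assume A: "Div N D = Div N' D'" and e0: "e0 < length (gE D')" and n: "snd (gE D' ! e0) = None"
    then have eq: "N' = N" "D' = D" by auto
    have "e0 = d0" using none_unique[OF DivR.hyps(2) _ DivR.hyps(3) _ DivR.hyps(4)] e0 n eq by simp
    then show "HL (plug D' e0 F) N'" using DivR.hyps(1) eq by simp
  qed
next
  case (TimesL G e F A)
  show ?case
  proof (intro allI impI)
    fix N D e0 assume A: "A = Div N D" and e0: "e0 < length (gE D)" and n: "snd (gE D ! e0) = None"
    have HL1: "HL (plug D e0 (repl1 G e F)) N" using TimesL.IH A e0 n by blast
    have wG: "wfg G" by (rule TimesL.hyps(2))
    note tmF = times_edge[OF wG TimesL.hyps(3,4)]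
    have iY: "wfg (repl1 G e F) \<and> wf_tp A \<and> length (gext (repl1 G e F)) = ttype A"
      by (rule HL_inv[OF TimesL.hyps(1)])
    have wD: "wf_tp (Div N D)" using iY A by simp
    have lG: "length (gext G) = ttype (Div N D)" using iY A by simp
    define P where "P = plug D e0 G"
    have dP: "decomp P (map_hgraph the D) {e0} (\<lambda>i. gE (map_hgraph the D) ! i) (\<lambda>_. G) g_node
       (\<lambda>i. h_node i G (fst (gE (map_hgraph the D) ! i)))"
      unfolding P_def by (rule plug_decomp[OF wD e0 n wfg_struct[OF wG] lG])
    have wP: "wfg P" unfolding P_def by (rule plug_wfg[OF wD e0 n wG lG])
    obtain e' where e': "e' < length (gE P)"
      "gE P ! e' = emap (h_node e0 G (fst (gE (map_hgraph the D) ! e0))) (gE G ! e)"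
      using decomp_edge_in[OF dP _ nth_mem[OF TimesL.hyps(3)]] by auto
    have le': "snd (gE P ! e') = Times F" using e'(2) TimesL.hyps(4) by simp
    have d2: "decomp (repl1 P e' F) P {e'} (\<lambda>i. gE P ! i) (\<lambda>_. F) g_node (\<lambda>i. h_node i F (fst (gE P ! i)))"
      by (rule repl1_decomp[OF decomp_struct[OF dP] e'(1) tmF(2)]) (use e'(2) tmF(3) in simp)
    have d3: "decomp (repl1 G e F) G {e} (\<lambda>i. gE G ! i) (\<lambda>_. F) g_node (\<lambda>i. h_node i F (fst (gE G ! i)))"
      by (rule repl1_decomp[OF wfg_struct[OF wG] TimesL.hyps(3) tmF(2,3)])
    have dP': "decomp (plug D e0 (repl1 G e F)) (map_hgraph the D) {e0} (\<lambda>i. gE (map_hgraph the D) ! i)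
       (\<lambda>_. repl1 G e F) g_node (\<lambda>i. h_node i (repl1 G e F) (fst (gE (map_hgraph the D) ! i)))"
      by (rule plug_decomp[OF wD e0 n decomp_struct[OF d3]]) (use lG in simp)
    have "hg_iso (repl1 P e' F) (plug D e0 (repl1 G e F))"
      by (rule nest_iso[OF dP _ e'(2) d2 d3 dP']) (auto simp: hg_iso_refl)
    then have "hg_iso (plug D e0 (repl1 G e F)) (repl1 P e' F)"
      by (rule hg_iso_sym[OF decomp_struct[OF d2]])
    from HL.Iso[OF HL1 this] have "HL (repl1 P e' F) N" .
    from HL.TimesL[OF this wP e'(1) le'] show "HL (plug D e0 G) N" unfolding P_def .
  qed
next
  case (TimesR M Hs)
  show ?case by simp
qed

theorem proposition2:
  shows "(\<forall>H C e0 M. HL H C \<longrightarrow> e0 < length (gE H) \<longrightarrow> snd (gE H ! e0) = Times M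
            \<longrightarrow> HL (repl1 H e0 M) C)
       \<and> (\<forall>H N D e0. HL H (Div N D) \<longrightarrow> e0 < length (gE D) \<longrightarrow> snd (gE D ! e0) = None
            \<longrightarrow> HL (plug D e0 H) N)"
  using part1 part2 by blast

end
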